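(* Let $G=\mathbf{PGO}_8$ be the split adjoint group of type ${\rm D}_4$. Then $\operatorname{Sdec}(G)=\operatorname{Dec}(G)$, i.e. every semi-decomposable degree $3$ invariant of $G$ is decomposable.
   Context: For a split semisimple group $G=G^{sc}/\boldsymbol{\mu}$ let $T^*_{sc}$ be the weight lattice, $T^*\subseteq T^*_{sc}$ the characters trivial on $\boldsymbol{\mu}$, $W$ the Weyl group. Let $c_2\colon\mathbb{Z}[T^*_{sc}]\to S^2(T^*_{sc})$ be the additive map obtained by composing the ring homomorphism $\mathbb{Z}[T^*_{sc}]\to S^*(T^*_{sc})/S^{\ge3}(T^*_{sc})$, $e^{-\omega}\mapsto1-\omega$ (so $e^{\omega}\mapsto1+\omega+\omega^2$) for fundamental weights $\omega$, with projection to degree 2. $\operatorname{Dec}(G)=c_2(\mathbb{Z}[T^*]^W)$ (decomposable invariants); $I^W_{sc}$ is the ideal of $\mathbb{Z}[T^*_{sc}]$ generated by the $W$-invariant elements of the augmentation ideal (kernel of $e^\lambda\mapsto1$); $\operatorname{Sdec}(G)=c_2(\mathbb{Z}[T^*]\cap I^W_{sc})$ (semi-decomposable invariants). *)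

theory Defs
  imports "HOL-Library.Poly_Mapping" "HOL-Library.Product_Plus"
begin

text \<open>Weights are written in the basis of fundamental
weights w1,w2,w3,w4 (node 2 is the central node of the Dynkin diagram), so the
weight lattice T*_sc is Z^4. The group ring Z[T*_sc] is the ring of finitely
supported functions T*_sc \<Rightarrow> int with convolution product (Poly_Mapping).\<close>

type_synonym wt = "int \<times> int \<times> int \<times> int"
type_synonym grpring = "wt \<Rightarrow>\<^sub>0 int"

definition coord :: "wt \<Rightarrow> nat \<Rightarrow> int" where
  "coord l i = (case l of (a,b,c,d) \<Rightarrow>
     (if i = 1 then a else if i = 2 then b else if i = 3 then c else if i = 4 then d else 0))"

definition wscale :: "int \<Rightarrow> wt \<Rightarrow> wt" where
  "wscale k l = (case l of (a,b,c,d) \<Rightarrow> (k*a, k*b, k*c, k*d))"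

definition wsub :: "wt \<Rightarrow> wt \<Rightarrow> wt" where
  "wsub l m = (case l of (a,b,c,d) \<Rightarrow> case m of (a',b',c',d') \<Rightarrow> (a-a', b-b', c-c', d-d'))"

text \<open>Simple roots of D4 in fundamental-weight coordinates (rows of the Cartan matrix).\<close>
definition simple_root :: "nat \<Rightarrow> wt" where
  "simple_root i = (if i = 1 then (2,-1,0,0) else if i = 2 then (-1,2,-1,-1)
     else if i = 3 then (0,-1,2,0) else (0,-1,0,2))"

definition simple_refl :: "nat \<Rightarrow> wt \<Rightarrow> wt" where
  "simple_refl i l = wsub l (wscale (coord l i) (simple_root i))"

inductive_set weyl :: "(wt \<Rightarrow> wt) set" where
  weyl_id: "id \<in> weyl"
| weyl_step: "w \<in> weyl \<Longrightarrow> i \<in> {1,2,3,4} \<Longrightarrow> simple_refl i \<circ> w \<in> weyl"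

text \<open>T* for G = PGO_8 (adjoint): characters trivial on the full centre = root lattice.\<close>
definition root_lattice :: "wt set" where
  "root_lattice = {l. \<exists>c1 c2 c3 c4 :: int.
     l = wscale c1 (simple_root 1) + wscale c2 (simple_root 2)
       + wscale c3 (simple_root 3) + wscale c4 (simple_root 4)}"

definition W_invariant :: "grpring \<Rightarrow> bool" where
  "W_invariant f \<longleftrightarrow> (\<forall>w\<in>weyl. \<forall>l. Poly_Mapping.lookup f (w l) = Poly_Mapping.lookup f l)"

definition aug :: "grpring \<Rightarrow> int" where
  "aug f = (\<Sum>l\<in>Poly_Mapping.keys f. Poly_Mapping.lookup f l)"

inductive_set IW_sc :: "grpring set" where
  IW_zero: "0 \<in> IW_sc"
| IW_gen: "W_invariant h \<Longrightarrow> aug h = 0 \<Longrightarrow> g * h \<in> IW_sc"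
| IW_add: "a \<in> IW_sc \<Longrightarrow> b \<in> IW_sc \<Longrightarrow> a + b \<in> IW_sc"

text \<open>Symmetric algebra S*(T*_sc) = Z[x1,x2,x3,x4] (x_i = w_i), polynomials as
finitely supported functions from exponent vectors to int.\<close>
type_synonym mon = "nat \<times> nat \<times> nat \<times> nat"
type_synonym spoly = "mon \<Rightarrow>\<^sub>0 int"

definition unit_mon :: "nat \<Rightarrow> mon" where
  "unit_mon i = (if i = 1 then (1,0,0,0) else if i = 2 then (0,1,0,0)
     else if i = 3 then (0,0,1,0) else (0,0,0,1))"

definition X :: "nat \<Rightarrow> spoly" where
  "X i = Poly_Mapping.single (unit_mon i) 1"

definition mdeg :: "mon \<Rightarrow> nat" where
  "mdeg m = (case m of (a,b,c,d) \<Rightarrow> a+b+c+d)"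

text \<open>Image of e^{a w_i}: e^{-w_i} \<mapsto> 1 - x_i, e^{w_i} \<mapsto> 1 + x_i + x_i^2
(modulo degree \<ge> 3, which does not affect the degree-2 part).\<close>
definition chern_factor :: "int \<Rightarrow> nat \<Rightarrow> spoly" where
  "chern_factor a i = (if a \<ge> 0 then (1 + X i + X i ^ 2) ^ nat a else (1 - X i) ^ nat (- a))"

definition chern_img :: "wt \<Rightarrow> spoly" where
  "chern_img l = (\<Prod>i\<in>{1,2,3,4}. chern_factor (coord l i) i)"

text \<open>c_2 : Z[T*_sc] \<rightarrow> S^2(T*_sc), degree-2 element given by its coefficients
on degree-2 monomials (0 on all other monomials).\<close>
definition c2 :: "grpring \<Rightarrow> (mon \<Rightarrow> int)" where
  "c2 f = (\<lambda>m. if mdeg m = 2 then (\<Sum>l\<in>Poly_Mapping.keys f. Poly_Mapping.lookup f l * Poly_Mapping.lookup (chern_img l) m) else 0)"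

definition Dec :: "(mon \<Rightarrow> int) set" where
  "Dec = c2 ` {f. Poly_Mapping.keys f \<subseteq> root_lattice \<and> W_invariant f}"

definition Sdec :: "(mon \<Rightarrow> int) set" where
  "Sdec = c2 ` {f. Poly_Mapping.keys f \<subseteq> root_lattice \<and> f \<in> IW_sc}"

end

theory Submission
  imports Defs
begin

definition teq :: "spoly \<Rightarrow> spoly \<Rightarrow> bool" where
  "teq P Q \<longleftrightarrow> (\<forall>m. mdeg m \<le> 2 \<longrightarrow> Poly_Mapping.lookup P m = Poly_Mapping.lookup Q m)"

lemma mdeg_add: "mdeg (x + y) = mdeg x + mdeg y"
  by (cases x; cases y) (auto simp: mdeg_def)

lemma teq_refl: "teq P P" by (simp add: teq_def)
lemma teq_sym: "teq P Q \<Longrightarrow> teq Q P" by (simp add: teq_def)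
lemma teq_trans: "teq P Q \<Longrightarrow> teq Q R \<Longrightarrow> teq P R" by (simp add: teq_def)

lemma teq_mult:
  assumes "teq P P'" "teq Q Q'"
  shows "teq (P * Q) (P' * Q')"
  unfolding teq_def
proof (intro allI impI)
  fix m :: mon assume m: "mdeg m \<le> 2"
  have inner: "(\<Sum>q. Poly_Mapping.lookup Q q when m = l + q) = (\<Sum>q. Poly_Mapping.lookup Q' q when m = l + q)" for l
  proof -
    have "(Poly_Mapping.lookup Q q when m = l + q) = (Poly_Mapping.lookup Q' q when m = l + q)" for q
    proof (cases "m = l + q")
      case True
      then have "mdeg q \<le> 2" using m by (simp add: mdeg_add)
      then have "Poly_Mapping.lookup Q q = Poly_Mapping.lookup Q' q" using assms(2) unfolding teq_def by blast
      then show ?thesis by simp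
    qed simp
    then show ?thesis by simp
  qed
  have outer: "Poly_Mapping.lookup P l * (\<Sum>q. Poly_Mapping.lookup Q' q when m = l + q)
     = Poly_Mapping.lookup P' l * (\<Sum>q. Poly_Mapping.lookup Q' q when m = l + q)" for l
  proof (cases "\<exists>q. m = l + q")
    case True
    then obtain q where "m = l + q" by blast
    then have "mdeg l \<le> 2" using m by (simp add: mdeg_add)
    then have "Poly_Mapping.lookup P l = Poly_Mapping.lookup P' l" using assms(1) unfolding teq_def by blast
    then show ?thesis by simp
  next
    case False
    then have ne: "m \<noteq> l + q" for q by blast
    have "\<And>q. (Poly_Mapping.lookup Q' q when m = l + q) = 0" using ne by simp
    then have "(\<Sum>q. Poly_Mapping.lookup Q' q when m = l + q) = 0" by simp
    then show ?thesis by simp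
  qed
  show "Poly_Mapping.lookup (P * Q) m = Poly_Mapping.lookup (P' * Q') m"
  proof -
    have "(\<lambda>l. Poly_Mapping.lookup P l * (\<Sum>q. Poly_Mapping.lookup Q' q when m = l + q))
      = (\<lambda>l. Poly_Mapping.lookup P' l * (\<Sum>q. Poly_Mapping.lookup Q' q when m = l + q))"
      by (rule ext) (rule outer)
    then show ?thesis unfolding lookup_mult inner by (rule arg_cong)
  qed
qed

definition poly1 :: "mon \<Rightarrow> int \<Rightarrow> int \<Rightarrow> int \<Rightarrow> spoly" where
  "poly1 u e0 e1 e2 = Poly_Mapping.single 0 e0 + Poly_Mapping.single u e1 + Poly_Mapping.single (u+u) e2"

lemma lookup_single_big: "mdeg k > 2 \<Longrightarrow> mdeg m \<le> 2 \<Longrightarrow> Poly_Mapping.lookup (Poly_Mapping.single k c) m = 0"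
  by (auto simp: lookup_single when_def)

lemma poly1_mult:
  assumes u: "mdeg u = 1"
  shows "teq (poly1 u e0 e1 e2 * poly1 u d0 d1 d2) (poly1 u (e0*d0) (e0*d1+e1*d0) (e0*d2+e1*d1+e2*d0))"
  unfolding teq_def
proof (intro allI impI)
  fix m :: mon assume m: "mdeg m \<le> 2"
  have d1: "mdeg (u+u) = 2" using u by (simp only: mdeg_add)
  have d0: "mdeg (0::mon) = 0" by (simp add: mdeg_def zero_prod_def)
  note d = d1 d0
  have big: "m \<noteq> u+(u+u)" "m \<noteq> u+u+u" "m \<noteq> (u+u)+(u+u)" "m \<noteq> u+u+(u+u)" "m \<noteq> u+(u+u+u)"
    using u m by (auto simp: mdeg_add)
  have ne: "u \<noteq> 0" "u + u \<noteq> 0" "u + u \<noteq> u" using u d by (metis zero_neq_one, metis zero_neq_numeral, metis numeral_One num.distinct(1) numeral_eq_iff)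
  show "Poly_Mapping.lookup (poly1 u e0 e1 e2 * poly1 u d0 d1 d2) m =
    Poly_Mapping.lookup (poly1 u (e0*d0) (e0*d1+e1*d0) (e0*d2+e1*d1+e2*d0)) m"
    unfolding poly1_def distrib_left distrib_right mult_single lookup_add lookup_single
    using big ne by (auto simp: when_def add_ac)
qed

definition tri :: "int \<Rightarrow> int" where "tri a = a * (a + 1) div 2"

lemma tri2: "2 * tri a = a * (a + 1)"
proof -
  have "even (a * (a + 1))" by simp
  then show ?thesis unfolding tri_def by simp
qed

lemma tri_succ: "tri (a + 1) = tri a + a + 1"
  using tri2[of a] tri2[of "a+1"] by (simp add: algebra_simps)

lemma teq_multL: "teq Q Q' \<Longrightarrow> teq (P * Q) (P * Q')"
  by (rule teq_mult[OF teq_refl])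

lemma mdeg_unit: "mdeg (unit_mon i) = 1"
  by (simp add: unit_mon_def mdeg_def)

lemma X_poly1: "X i = poly1 (unit_mon i) 0 1 0"
  by (simp add: X_def poly1_def)

lemma poly1_eq_cong: "e0 = f0 \<Longrightarrow> e1 = f1 \<Longrightarrow> e2 = f2 \<Longrightarrow> poly1 u e0 e1 e2 = poly1 u f0 f1 f2"
  by simp

lemma B1: "1 + X i + X i ^ 2 = poly1 (unit_mon i) 1 1 1"
  by (simp add: X_def poly1_def power2_eq_square mult_single)

lemma B2: "1 - X i = poly1 (unit_mon i) 1 (-1) 0"
  by (simp add: X_def poly1_def single_uminus)

lemma teq_trans_calc [trans]: "teq P Q \<Longrightarrow> teq Q R \<Longrightarrow> teq P R" by (rule teq_trans)

lemma pow_pos: "teq ((1 + X i + X i ^ 2) ^ n) (poly1 (unit_mon i) 1 (int n) (tri (int n)))"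
proof (induction n)
  case 0
  show ?case by (simp add: tri_def poly1_def teq_refl)
next
  case (Suc n)
  have "teq ((1 + X i + X i ^ 2) ^ Suc n) (poly1 (unit_mon i) 1 1 1 * poly1 (unit_mon i) 1 (int n) (tri (int n)))"
    unfolding power_Suc B1 using Suc.IH unfolding B1 by (rule teq_multL)
  also have "teq \<dots> (poly1 (unit_mon i) (1*1) (1*int n + 1*1) (1*tri (int n) + 1*int n + 1*1))"
    by (rule poly1_mult[OF mdeg_unit])
  also have "\<dots> = poly1 (unit_mon i) 1 (int (Suc n)) (tri (int (Suc n)))"
    using tri_succ[of "int n"] by (intro poly1_eq_cong) (simp_all add: add.commute)
  finally show ?case .
qed


lemma pow_neg: "teq ((1 - X i) ^ n) (poly1 (unit_mon i) 1 (- int n) (tri (- int n)))"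
proof (induction n)
  case 0
  show ?case by (simp add: tri_def poly1_def teq_refl)
next
  case (Suc n)
  have "teq ((1 - X i) ^ Suc n) (poly1 (unit_mon i) 1 (-1) 0 * poly1 (unit_mon i) 1 (- int n) (tri (- int n)))"
    unfolding power_Suc B2 using Suc.IH unfolding B2 by (rule teq_multL)
  also have "teq \<dots> (poly1 (unit_mon i) (1*1) (1*(- int n) + (-1)*1) (1*tri (- int n) + (-1)*(- int n) + 0*1))"
    by (rule poly1_mult[OF mdeg_unit])
  also have "\<dots> = poly1 (unit_mon i) 1 (- int (Suc n)) (tri (- int (Suc n)))"
    using tri_succ[of "- int n - 1"] by (intro poly1_eq_cong) (simp_all, smt (verit))
  finally show ?case .
qed

lemma cf_teq: "teq (chern_factor a i) (poly1 (unit_mon i) 1 a (tri a))"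
proof (cases "a \<ge> 0")
  case True
  then show ?thesis using pow_pos[of i "nat a"] by (simp add: chern_factor_def)
next
  case False
  then show ?thesis using pow_neg[of i "nat (-a)"] by (simp add: chern_factor_def)
qed

definition CP :: "wt \<Rightarrow> spoly" where
  "CP l = (case l of (a,b,c,d) \<Rightarrow> poly1 (unit_mon 1) 1 a (tri a) * (poly1 (unit_mon 2) 1 b (tri b)
     * (poly1 (unit_mon 3) 1 c (tri c) * poly1 (unit_mon 4) 1 d (tri d))))"

lemma chern_CP: "teq (chern_img l) (CP l)"
proof -
  obtain a b c d where l: "l = (a,b,c,d)" by (cases l) auto
  have "chern_img l = chern_factor a 1 * (chern_factor b 2 * (chern_factor c 3 * chern_factor d 4))"
    by (simp add: chern_img_def l coord_def)
  then show ?thesis unfolding CP_def l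
    by (simp only: prod.case) (intro teq_mult cf_teq)
qed

lemma CP_lookups:
  "Poly_Mapping.lookup (CP (a,b,c,d)) (2,0,0,0) = tri a"
  "Poly_Mapping.lookup (CP (a,b,c,d)) (0,2,0,0) = tri b"
  "Poly_Mapping.lookup (CP (a,b,c,d)) (0,0,2,0) = tri c"
  "Poly_Mapping.lookup (CP (a,b,c,d)) (0,0,0,2) = tri d"
  "Poly_Mapping.lookup (CP (a,b,c,d)) (1,1,0,0) = a * b"
  "Poly_Mapping.lookup (CP (a,b,c,d)) (1,0,1,0) = a * c"
  "Poly_Mapping.lookup (CP (a,b,c,d)) (1,0,0,1) = a * d"
  "Poly_Mapping.lookup (CP (a,b,c,d)) (0,1,1,0) = b * c"
  "Poly_Mapping.lookup (CP (a,b,c,d)) (0,1,0,1) = b * d"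
  "Poly_Mapping.lookup (CP (a,b,c,d)) (0,0,1,1) = c * d"
  by (simp_all add: CP_def poly1_def unit_mon_def distrib_left distrib_right mult_single lookup_add lookup_single when_def lookup_one zero_prod_def)

definition S :: "grpring \<Rightarrow> (wt \<Rightarrow> int) \<Rightarrow> int" where
  "S F G = (\<Sum>l\<in>Poly_Mapping.keys F. Poly_Mapping.lookup F l * G l)"

lemma S_superset:
  assumes "finite A" "Poly_Mapping.keys F \<subseteq> A"
  shows "S F G = (\<Sum>l\<in>A. Poly_Mapping.lookup F l * G l)"
  unfolding S_def using assms
  by (intro sum.mono_neutral_left) (auto simp: in_keys_iff)

lemma S_add: "S (F + H) G = S F G + S H G"
proof -
  have fin: "finite (Poly_Mapping.keys F \<union> Poly_Mapping.keys H)" by simp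
  have k: "Poly_Mapping.keys (F + H) \<subseteq> Poly_Mapping.keys F \<union> Poly_Mapping.keys H" by (rule keys_add)
  have kF: "Poly_Mapping.keys F \<subseteq> Poly_Mapping.keys F \<union> Poly_Mapping.keys H" by auto
  have kH: "Poly_Mapping.keys H \<subseteq> Poly_Mapping.keys F \<union> Poly_Mapping.keys H" by auto
  show ?thesis
    unfolding S_superset[OF fin k] S_superset[OF fin kF] S_superset[OF fin kH]
    by (simp add: lookup_add sum.distrib algebra_simps)
qed

lemma S_zero [simp]: "S 0 G = 0" by (simp add: S_def)

lemma S_diff: "S (F - H) G = S F G - S H G"
  using S_add[of "F - H" H G] by simp

lemma S_single: "S (Poly_Mapping.single k c) G = c * G k"
  by (cases "c = 0") (simp_all add: S_def)

lemma S_fadd: "S F (\<lambda>l. G1 l + G2 l) = S F G1 + S F G2"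
  by (simp add: S_def sum.distrib algebra_simps)

lemma S_fdiff: "S F (\<lambda>l. G1 l - G2 l) = S F G1 - S F G2"
  by (simp add: S_def sum_subtractf algebra_simps)

lemma S_fscale: "S F (\<lambda>l. k * G l) = k * S F G"
  by (simp add: S_def sum_distrib_left algebra_simps)

lemma S_cong: "(\<And>l. G l = G' l) \<Longrightarrow> S F G = S F G'"
  by (simp add: S_def)

lemma S_setsum: "finite A \<Longrightarrow> S (\<Sum>x\<in>A. F x) G = (\<Sum>x\<in>A. S (F x) G)"
  by (induction A rule: finite_induct) (simp_all add: S_add)

lemma pm_expand: "F = (\<Sum>l\<in>Poly_Mapping.keys F. Poly_Mapping.single l (Poly_Mapping.lookup F l))"
proof (rule poly_mapping_eqI)
  fix k
  show "Poly_Mapping.lookup F k = Poly_Mapping.lookup (\<Sum>l\<in>Poly_Mapping.keys F. Poly_Mapping.single l (Poly_Mapping.lookup F l)) k"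
    by (simp add: lookup_sum lookup_single when_def in_keys_iff)
qed

lemma S_mult: "S (g * h) G = S g (\<lambda>l. S h (\<lambda>m. G (l + m)))"
proof -
  have "g * h = (\<Sum>l\<in>Poly_Mapping.keys g. Poly_Mapping.single l (Poly_Mapping.lookup g l)) *
       (\<Sum>m\<in>Poly_Mapping.keys h. Poly_Mapping.single m (Poly_Mapping.lookup h m))"
    by (subst pm_expand[of g], subst pm_expand[of h]) (rule refl)
  also have "\<dots> = (\<Sum>l\<in>Poly_Mapping.keys g. \<Sum>m\<in>Poly_Mapping.keys h.
       Poly_Mapping.single (l + m) (Poly_Mapping.lookup g l * Poly_Mapping.lookup h m))"
    by (simp add: sum_product mult_single)
  finally have e: "g * h = \<dots>" .
  have "S (g * h) G = (\<Sum>l\<in>Poly_Mapping.keys g. \<Sum>m\<in>Poly_Mapping.keys h.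
       Poly_Mapping.lookup g l * Poly_Mapping.lookup h m * G (l + m))"
    unfolding e by (simp add: S_setsum S_single)
  also have "\<dots> = S g (\<lambda>l. S h (\<lambda>m. G (l + m)))"
    by (simp add: S_def sum_distrib_left mult.assoc)
  finally show ?thesis .
qed

lemma aug_S: "aug F = S F (\<lambda>_. 1)" by (simp add: aug_def S_def)

lemma c2_S: "c2 F m = (if mdeg m = 2 then S F (\<lambda>l. Poly_Mapping.lookup (chern_img l) m) else 0)"
  by (simp add: c2_def S_def)

lemma chern_lookup2: "mdeg m = 2 \<Longrightarrow> Poly_Mapping.lookup (chern_img l) m = Poly_Mapping.lookup (CP l) m"
proof -
  assume "mdeg m = 2"
  then have "mdeg m \<le> 2" by simp
  then show ?thesis using chern_CP[of l] unfolding teq_def by blast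
qed

lemma sr_tuple:
  "simple_refl 1 (a,b,c,d) = (-a, b+a, c, d)"
  "simple_refl (Suc 0) (a,b,c,d) = (-a, b+a, c, d)"
  "simple_refl 2 (a,b,c,d) = (a+b, -b, c+b, d+b)"
  "simple_refl 3 (a,b,c,d) = (a, b+c, -c, d)"
  "simple_refl 4 (a,b,c,d) = (a, b+d, c, -d)"
  by (simp_all add: simple_refl_def wsub_def wscale_def coord_def simple_root_def)

lemma sr_invol: assumes "i \<in> {1,2,3,4}" shows "simple_refl i (simple_refl i l) = l"
proof -
  obtain a b c d where l: "l = (a,b,c,d)" by (cases l) auto
  from assms have "i = 1 \<or> i = 2 \<or> i = 3 \<or> i = 4" by simp
  then show ?thesis unfolding l by (elim disjE) (simp_all add: sr_tuple)
qed

lemma sr_weyl: "i \<in> {1,2,3,4} \<Longrightarrow> simple_refl i \<in> weyl"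
  using weyl_step[OF weyl_id, of i] by simp

lemma S_refl:
  assumes h: "W_invariant h" and i: "i \<in> {1,2,3,4}"
  shows "S h (\<lambda>l. G (simple_refl i l)) = S h G"
proof -
  let ?s = "simple_refl i"
  have hs: "Poly_Mapping.lookup h (?s l) = Poly_Mapping.lookup h l" for l
    using h sr_weyl[OF i] unfolding W_invariant_def by blast
  have inv: "?s (?s l) = l" for l using sr_invol[OF i] .
  show ?thesis unfolding S_def
    by (rule sum.reindex_bij_witness[of _ ?s ?s]) (auto simp: inv hs in_keys_iff)
qed

lemma S_weyl:
  assumes h: "W_invariant h" and w: "w \<in> weyl"
  shows "S h (\<lambda>l. G (w l)) = S h G"
  using w
proof (induction arbitrary: G)
  case weyl_id
  then show ?case by (simp add: comp_def)
next
  case (weyl_step w i)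
  have "S h (\<lambda>l. G ((simple_refl i \<circ> w) l)) = S h (\<lambda>l. (\<lambda>x. G (simple_refl i x)) (w l))" by simp
  also have "\<dots> = S h (\<lambda>x. G (simple_refl i x))" by (rule weyl_step.IH)
  also have "\<dots> = S h G" by (rule S_refl[OF h weyl_step.hyps(2)])
  finally show ?case .
qed

fun word :: "nat list \<Rightarrow> wt \<Rightarrow> wt" where
  "word [] = id"
| "word (i # is) = simple_refl i \<circ> word is"

lemma word_weyl: "set is \<subseteq> {1,2,3,4} \<Longrightarrow> word is \<in> weyl"
proof (induction "is")
  case Nil
  then show ?case using weyl_id by (simp add: id_def)
next
  case (Cons i "is")
  then have "word is \<in> weyl" "i \<in> {1,2,3,4}" by auto
  then have "simple_refl i \<circ> word is \<in> weyl" by (rule weyl_step)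
  then show ?case by (simp add: comp_def)
qed

definition E1 :: "wt \<Rightarrow> int" where "E1 l = (case l of (a,b,c,d) \<Rightarrow> 2*a+2*b+c+d)"
definition E2 :: "wt \<Rightarrow> int" where "E2 l = (case l of (a,b,c,d) \<Rightarrow> 2*b+c+d)"
definition E3 :: "wt \<Rightarrow> int" where "E3 l = (case l of (a,b,c,d) \<Rightarrow> c+d)"
definition E4 :: "wt \<Rightarrow> int" where "E4 l = (case l of (a,b,c,d) \<Rightarrow> d-c)"
lemmas Edefs = E1_def E2_def E3_def E4_def

definition f12 :: "wt \<Rightarrow> wt" where "f12 = word [2,3,1,2,4,2,3,1,2,1]"
definition f23 :: "wt \<Rightarrow> wt" where "f23 = word [3,2,4,2,3,2]"
definition f34 :: "wt \<Rightarrow> wt" where "f34 = word [4,3]"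
definition f24 :: "wt \<Rightarrow> wt" where "f24 = word [2,4,3,2]"

lemma flips_weyl: "f12 \<in> weyl" "f23 \<in> weyl" "f34 \<in> weyl" "f24 \<in> weyl"
  unfolding f12_def f23_def f34_def f24_def by (rule word_weyl, simp)+

lemma swaps_weyl: "simple_refl 1 \<in> weyl" "simple_refl 2 \<in> weyl" "simple_refl 3 \<in> weyl"
  by (simp_all add: sr_weyl)

lemma flip_E:
  "E1 (f12 l) = - E1 l" "E2 (f12 l) = - E2 l" "E3 (f12 l) = E3 l" "E4 (f12 l) = E4 l"
  "E1 (f23 l) = E1 l" "E2 (f23 l) = - E2 l" "E3 (f23 l) = - E3 l" "E4 (f23 l) = E4 l"
  "E1 (f34 l) = E1 l" "E2 (f34 l) = E2 l" "E3 (f34 l) = - E3 l" "E4 (f34 l) = - E4 l"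
  "E1 (f24 l) = E1 l" "E2 (f24 l) = - E2 l" "E3 (f24 l) = E3 l" "E4 (f24 l) = - E4 l"
  by (cases l, simp add: f12_def f23_def f34_def f24_def sr_tuple Edefs algebra_simps)+

lemma swap_E:
  "E1 (simple_refl 1 l) = E2 l" "E2 (simple_refl 1 l) = E1 l" "E3 (simple_refl 1 l) = E3 l" "E4 (simple_refl 1 l) = E4 l"
  "E1 (simple_refl (Suc 0) l) = E2 l" "E2 (simple_refl (Suc 0) l) = E1 l" "E3 (simple_refl (Suc 0) l) = E3 l" "E4 (simple_refl (Suc 0) l) = E4 l"
  "E1 (simple_refl 2 l) = E1 l" "E2 (simple_refl 2 l) = E3 l" "E3 (simple_refl 2 l) = E2 l" "E4 (simple_refl 2 l) = E4 l"
  "E1 (simple_refl 3 l) = E1 l" "E2 (simple_refl 3 l) = E2 l" "E3 (simple_refl 3 l) = E4 l" "E4 (simple_refl 3 l) = E3 l"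
  by (cases l, simp add: sr_tuple Edefs algebra_simps)+

definition Rt :: "wt \<Rightarrow> bool" where "Rt l = (case l of (a,b,c,d) \<Rightarrow> even (c+d) \<and> even (a+c))"
definition Vc :: "wt \<Rightarrow> bool" where "Vc l = (case l of (a,b,c,d) \<Rightarrow> even (c+d) \<and> odd (a+c))"
definition S3 :: "wt \<Rightarrow> bool" where "S3 l = (case l of (a,b,c,d) \<Rightarrow> odd (c+d) \<and> even (a+d))"
definition S4 :: "wt \<Rightarrow> bool" where "S4 l = (case l of (a,b,c,d) \<Rightarrow> odd (c+d) \<and> odd (a+d))"
lemmas Cdefs = Rt_def Vc_def S3_def S4_def

lemma cls_sr: "i \<in> {1,2,3,4} \<Longrightarrow> Rt (simple_refl i l) = Rt l \<and> Vc (simple_refl i l) = Vc l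
   \<and> S3 (simple_refl i l) = S3 l \<and> S4 (simple_refl i l) = S4 l"
proof -
  obtain a b c d where l: "l = (a,b,c,d)" by (cases l) auto
  assume "i \<in> {1,2,3,4}"
  then have "i = 1 \<or> i = 2 \<or> i = 3 \<or> i = 4" by simp
  then show ?thesis unfolding l
    by (elim disjE; simp only: sr_tuple Cdefs prod.case; presburger)
qed

lemma cls_weyl: assumes "w \<in> weyl"
  shows "Rt (w l) = Rt l \<and> Vc (w l) = Vc l \<and> S3 (w l) = S3 l \<and> S4 (w l) = S4 l"
  using assms by (induction arbitrary: l) (auto simp: cls_sr)

lemma S_swap: assumes "W_invariant h" "w \<in> weyl" "\<And>l. G l = H (w l)" shows "S h G = S h H"
proof -
  have "S h G = S h (\<lambda>l. H (w l))" using assms(3) by (intro S_cong) simp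
  also have "\<dots> = S h H" by (rule S_weyl[OF assms(1,2)])
  finally show ?thesis .
qed

lemma S_flip_zero: assumes "W_invariant h" "w \<in> weyl" "\<And>l. G (w l) = - G l" shows "S h G = 0"
proof -
  have "S h (\<lambda>l. - G l) = S h G" by (rule S_swap[OF assms(1,2)]) (simp add: assms(3))
  moreover have "S h (\<lambda>l. - G l) = - S h G" using S_fscale[of h "-1" G] by simp
  ultimately show ?thesis by simp
qed

lemma S_fold2: assumes "W_invariant h" "w \<in> weyl" "\<And>l. G l = H l + H (w l)" shows "S h G = 2 * S h H"
proof -
  have "S h G = S h (\<lambda>l. H l + H (w l))" by (rule S_cong) (rule assms(3))
  also have "\<dots> = S h H + S h (\<lambda>l. H (w l))" by (rule S_fadd)
  finally have "S h G = S h H + S h (\<lambda>l. H (w l))" .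
  also have "S h (\<lambda>l. H (w l)) = S h H" by (rule S_weyl[OF assms(1,2)])
  finally show ?thesis by simp
qed

lemma S_dvd: "(\<And>l. k dvd G l) \<Longrightarrow> k dvd S h G"
  unfolding S_def by (intro dvd_sum) simp

definition stable :: "(wt \<Rightarrow> bool) \<Rightarrow> bool" where
  "stable P \<longleftrightarrow> (\<forall>w\<in>weyl. \<forall>l. P (w l) = P l)"

lemma stable_cls: "stable Rt" "stable Vc" "stable S3" "stable S4" "stable (\<lambda>_. True)"
  unfolding stable_def using cls_weyl by auto

lemma stableD: "stable P \<Longrightarrow> w \<in> weyl \<Longrightarrow> P (w l) = P l"
  unfolding stable_def by blast

context
  fixes h :: grpring
  assumes h: "W_invariant h"
begin

lemma F0lin:
  assumes P: "stable P"
  shows "S h (\<lambda>l. of_bool (P l) * E1 l) = 0" "S h (\<lambda>l. of_bool (P l) * E2 l) = 0"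
        "S h (\<lambda>l. of_bool (P l) * E3 l) = 0" "S h (\<lambda>l. of_bool (P l) * E4 l) = 0"
proof -
  show "S h (\<lambda>l. of_bool (P l) * E1 l) = 0"
    by (rule S_flip_zero[OF h flips_weyl(1)]) (simp add: flip_E stableD[OF P flips_weyl(1)])
  show "S h (\<lambda>l. of_bool (P l) * E2 l) = 0"
    by (rule S_flip_zero[OF h flips_weyl(1)]) (simp add: flip_E stableD[OF P flips_weyl(1)])
  show "S h (\<lambda>l. of_bool (P l) * E3 l) = 0"
    by (rule S_flip_zero[OF h flips_weyl(3)]) (simp add: flip_E stableD[OF P flips_weyl(3)])
  show "S h (\<lambda>l. of_bool (P l) * E4 l) = 0"
    by (rule S_flip_zero[OF h flips_weyl(3)]) (simp add: flip_E stableD[OF P flips_weyl(3)])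
qed

lemma F0lin_all: "S h E1 = 0" "S h E2 = 0" "S h E3 = 0" "S h E4 = 0"
  using F0lin[OF stable_cls(5)] by simp_all

lemma F0quad:
  "S h (\<lambda>l. E1 l * E2 l) = 0" "S h (\<lambda>l. E1 l * E3 l) = 0" "S h (\<lambda>l. E1 l * E4 l) = 0"
  "S h (\<lambda>l. E2 l * E3 l) = 0" "S h (\<lambda>l. E2 l * E4 l) = 0" "S h (\<lambda>l. E3 l * E4 l) = 0"
proof -
  show "S h (\<lambda>l. E1 l * E2 l) = 0" by (rule S_flip_zero[OF h flips_weyl(2)]) (simp add: flip_E)
  show "S h (\<lambda>l. E1 l * E3 l) = 0" by (rule S_flip_zero[OF h flips_weyl(3)]) (simp add: flip_E)
  show "S h (\<lambda>l. E1 l * E4 l) = 0" by (rule S_flip_zero[OF h flips_weyl(3)]) (simp add: flip_E)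
  show "S h (\<lambda>l. E2 l * E3 l) = 0" by (rule S_flip_zero[OF h flips_weyl(1)]) (simp add: flip_E)
  show "S h (\<lambda>l. E2 l * E4 l) = 0" by (rule S_flip_zero[OF h flips_weyl(1)]) (simp add: flip_E)
  show "S h (\<lambda>l. E3 l * E4 l) = 0" by (rule S_flip_zero[OF h flips_weyl(2)]) (simp add: flip_E)
qed

lemma F0sq:
  "S h (\<lambda>l. E2 l ^ 2) = S h (\<lambda>l. E1 l ^ 2)" "S h (\<lambda>l. E3 l ^ 2) = S h (\<lambda>l. E1 l ^ 2)"
  "S h (\<lambda>l. E4 l ^ 2) = S h (\<lambda>l. E1 l ^ 2)"
proof -
  have a: "S h (\<lambda>l. E2 l ^ 2) = S h (\<lambda>l. E1 l ^ 2)"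
    by (rule S_swap[OF h swaps_weyl(1)]) (simp add: swap_E)
  have b: "S h (\<lambda>l. E3 l ^ 2) = S h (\<lambda>l. E2 l ^ 2)"
    by (rule S_swap[OF h swaps_weyl(2)]) (simp add: swap_E)
  have c: "S h (\<lambda>l. E4 l ^ 2) = S h (\<lambda>l. E3 l ^ 2)"
    by (rule S_swap[OF h swaps_weyl(3)]) (simp add: swap_E)
  show "S h (\<lambda>l. E2 l ^ 2) = S h (\<lambda>l. E1 l ^ 2)" "S h (\<lambda>l. E3 l ^ 2) = S h (\<lambda>l. E1 l ^ 2)"
    "S h (\<lambda>l. E4 l ^ 2) = S h (\<lambda>l. E1 l ^ 2)" using a b c by simp_all
qed

lemma quadS:
  "S h (\<lambda>l. q1*E1 l^2 + q2*E2 l^2 + q3*E3 l^2 + q4*E4 l^2 + q12*(E1 l*E2 l) + q13*(E1 l*E3 l)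
     + q14*(E1 l*E4 l) + q23*(E2 l*E3 l) + q24*(E2 l*E4 l) + q34*(E3 l*E4 l)
     + r1*E1 l + r2*E2 l + r3*E3 l + r4*E4 l) = (q1+q2+q3+q4) * S h (\<lambda>l. E1 l^2)"
  by (simp only: S_fadd S_fscale F0quad F0sq F0lin_all) (simp add: algebra_simps)

end

definition Od1 :: "wt \<Rightarrow> bool" where "Od1 l = (E1 l mod 4 = 2)"
definition Od2 :: "wt \<Rightarrow> bool" where "Od2 l = (E2 l mod 4 = 2)"
definition Od3 :: "wt \<Rightarrow> bool" where "Od3 l = (E3 l mod 4 = 2)"
definition Od4 :: "wt \<Rightarrow> bool" where "Od4 l = (E4 l mod 4 = 2)"
lemmas Oddefs = Od1_def Od2_def Od3_def Od4_def

definition cnt :: "wt \<Rightarrow> int" where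
  "cnt l = of_bool (Od1 l) + of_bool (Od2 l) + of_bool (Od3 l) + of_bool (Od4 l)"

lemma neg_mod4: "((- x::int) mod 4 = 2) = (x mod 4 = 2)" by presburger

lemma Od_flip:
  "Od1 (f12 l) = Od1 l" "Od2 (f12 l) = Od2 l" "Od3 (f12 l) = Od3 l" "Od4 (f12 l) = Od4 l"
  "Od1 (f23 l) = Od1 l" "Od2 (f23 l) = Od2 l" "Od3 (f23 l) = Od3 l" "Od4 (f23 l) = Od4 l"
  by (simp_all add: Oddefs flip_E neg_mod4)

lemma Od_swap:
  "Od1 (simple_refl (Suc 0) l) = Od2 l" "Od2 (simple_refl (Suc 0) l) = Od1 l" "Od3 (simple_refl (Suc 0) l) = Od3 l" "Od4 (simple_refl (Suc 0) l) = Od4 l"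
  "Od1 (simple_refl 2 l) = Od1 l" "Od2 (simple_refl 2 l) = Od3 l" "Od3 (simple_refl 2 l) = Od2 l" "Od4 (simple_refl 2 l) = Od4 l"
  "Od1 (simple_refl 3 l) = Od1 l" "Od2 (simple_refl 3 l) = Od2 l" "Od3 (simple_refl 3 l) = Od4 l" "Od4 (simple_refl 3 l) = Od3 l"
  by (simp_all add: Oddefs swap_E)

lemma cnt_inv: "cnt (f12 l) = cnt l" "cnt (simple_refl (Suc 0) l) = cnt l"
   "cnt (simple_refl 2 l) = cnt l" "cnt (simple_refl 3 l) = cnt l"
  by (simp_all add: cnt_def Od_flip Od_swap algebra_simps)

lemma spin_odd: "S3 l \<or> S4 l \<Longrightarrow> odd (E1 l) \<and> odd (E2 l) \<and> odd (E3 l) \<and> odd (E4 l)"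
  by (cases l) (simp add: Cdefs Edefs; presburger)

lemma par4: "odd (x1 + x2 + x3 + (x4::int)) \<Longrightarrow>
  of_bool (odd x1) + of_bool (odd x2) + of_bool (odd x3) + of_bool (odd x4) \<in> {1::int, 3}"
  by (cases "odd x1"; cases "odd x2"; cases "odd x3"; cases "odd x4") simp_all

lemma par3: "odd (x2 + x3 + (x4::int)) \<Longrightarrow>
  of_bool (odd x2) + of_bool (odd x3) + of_bool (odd x4) \<in> {1::int, 3}"
  by (cases "odd x2"; cases "odd x3"; cases "odd x4") simp_all

lemma mod4_2: "((2 * x::int) mod 4 = 2) = odd x" by presburger

lemma Vc_cnt: assumes "Vc l" shows "cnt l = 1 \<or> cnt l = 3"
proof -
  obtain a b c d where l: "l = (a,b,c,d)" by (cases l) auto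
  from assms have v: "even (c+d)" "odd (a+c)" by (simp_all add: l Vc_def)
  then obtain u where u: "c + d = 2*u" by (meson evenE)
  have e: "E1 l = 2*(a+b+u)" "E2 l = 2*(b+u)" "E3 l = 2*u" "E4 l = 2*(u-c)"
    using u by (simp_all add: l Edefs algebra_simps)
  have o: "odd ((a+b+u) + (b+u) + u + (u-c))"
  proof -
    have "(a+b+u) + (b+u) + u + (u-c) = (a + c) + 2*(b + 2*u - c)" by simp
    then show ?thesis using v(2) by simp
  qed
  have "cnt l \<in> {1,3}" unfolding cnt_def Oddefs e mod4_2 by (rule par4[OF o])
  then show ?thesis by simp
qed

lemma Rt_cnt: assumes "Rt l" "Od1 l" shows "of_bool (Od2 l) + of_bool (Od3 l) + of_bool (Od4 l) \<in> {1::int, 3}"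
proof -
  obtain a b c d where l: "l = (a,b,c,d)" by (cases l) auto
  from assms have v: "even (c+d)" "even (a+c)" by (simp_all add: l Rt_def)
  then obtain u where u: "c + d = 2*u" by (meson evenE)
  have e: "E1 l = 2*(a+b+u)" "E2 l = 2*(b+u)" "E3 l = 2*u" "E4 l = 2*(u-c)"
    using u by (simp_all add: l Edefs algebra_simps)
  have o1: "odd (a+b+u)" using assms(2) unfolding Od1_def e mod4_2 .
  have o: "odd ((b+u) + u + (u-c))"
  proof -
    have "(a+b+u) + ((b+u) + u + (u-c)) = (a + c) + 2*(b + 2*u - c)" by simp
    then have "even ((a+b+u) + ((b+u) + u + (u-c)))" using v(2) by simp
    moreover have "\<And>A B::int. even (A + B) \<Longrightarrow> odd A \<Longrightarrow> odd B" by presburger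
    ultimately show ?thesis using o1 by blast
  qed
  show ?thesis unfolding Oddefs e mod4_2 by (rule par3[OF o])
qed

lemma Vc_even: "Vc l \<Longrightarrow> even (E1 l)" by (cases l) (simp add: Cdefs Edefs; presburger)
lemma Rt_even: "Rt l \<Longrightarrow> even (E1 l)" by (cases l) (simp add: Cdefs Edefs; presburger)

lemma odd_sq8: "odd (x::int) \<Longrightarrow> 8 dvd x^2 - 1"
proof -
  assume "odd x"
  then obtain t where t: "x = 2*t+1" by (metis oddE)
  have "even (t*(t+1))" by simp
  then obtain s where "t*(t+1) = 2*s" by blast
  then have "x^2 - 1 = 8*s" unfolding t by (simp add: power2_eq_square algebra_simps)
  then show ?thesis by simp
qed

lemma od_sq32: "(x::int) mod 4 = 2 \<Longrightarrow> 32 dvd x^2 - 4"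
proof -
  assume "x mod 4 = 2"
  then obtain t where t: "x = 4*t+2" by (metis mod_div_mult_eq add.commute mult.commute)
  have "even (t*(t+1))" by simp
  then obtain s where "t*(t+1) = 2*s" by blast
  then have "x^2 - 4 = 32*s" unfolding t by (simp add: power2_eq_square algebra_simps)
  then show ?thesis by simp
qed

lemma ev_sq16: "even (x::int) \<Longrightarrow> x mod 4 \<noteq> 2 \<Longrightarrow> 16 dvd x^2"
proof -
  assume "even x" "x mod 4 \<noteq> 2"
  then have "x mod 4 = 0" by presburger
  then obtain t where t: "x = 4*t" by (metis mod_div_mult_eq add.commute mult.commute add_0)
  show ?thesis unfolding t by (simp add: power2_eq_square)
qed

abbreviation ob :: "bool \<Rightarrow> int" where "ob b \<equiv> of_bool b"

definition nE :: "wt \<Rightarrow> int" where "nE l = E1 l ^ 2 + E2 l ^ 2 + E3 l ^ 2 + E4 l ^ 2"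

lemma stable_s1: "stable P \<Longrightarrow> P (simple_refl (Suc 0) l) = P l"
  using stableD[of P "simple_refl 1" l] swaps_weyl(1) by simp

lemmas cls_s1 = stable_s1[OF stable_cls(1)] stable_s1[OF stable_cls(2)] stable_s1[OF stable_cls(3)] stable_s1[OF stable_cls(4)]

context
  fixes h :: grpring
  assumes h: "W_invariant h"
begin

lemma A_spin:
  assumes P: "stable P" and od: "\<And>l. P l \<Longrightarrow> odd (E1 l) \<and> odd (E2 l) \<and> odd (E3 l)"
  shows "8 dvd S h (\<lambda>l. ob (P l))"
proof -
  have nz: "P l \<Longrightarrow> E1 l \<noteq> 0 \<and> E2 l \<noteq> 0 \<and> E3 l \<noteq> 0" for l using od[of l] by auto
  have p1: "ob (P l) = ob (P l \<and> E1 l > 0) + ob (P (f12 l) \<and> E1 (f12 l) > 0)" for l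
    using nz[of l] by (cases "P l") (auto simp: flip_E stableD[OF P flips_weyl(1)])
  have p2: "ob (P l \<and> E1 l > 0) = ob (P l \<and> E1 l > 0 \<and> E2 l > 0) + ob (P (f23 l) \<and> E1 (f23 l) > 0 \<and> E2 (f23 l) > 0)" for l
    using nz[of l] by (cases "P l") (auto simp: flip_E stableD[OF P flips_weyl(2)])
  have p3: "ob (P l \<and> E1 l > 0 \<and> E2 l > 0) = ob (P l \<and> E1 l > 0 \<and> E2 l > 0 \<and> E3 l > 0)
     + ob (P (f34 l) \<and> E1 (f34 l) > 0 \<and> E2 (f34 l) > 0 \<and> E3 (f34 l) > 0)" for l
    using nz[of l] by (cases "P l") (auto simp: flip_E stableD[OF P flips_weyl(3)])
  have s1: "S h (\<lambda>l. ob (P l)) = 2 * S h (\<lambda>l. ob (P l \<and> E1 l > 0))"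
    by (rule S_fold2[OF h flips_weyl(1)]) (rule p1)
  have s2: "S h (\<lambda>l. ob (P l \<and> E1 l > 0)) = 2 * S h (\<lambda>l. ob (P l \<and> E1 l > 0 \<and> E2 l > 0))"
    by (rule S_fold2[OF h flips_weyl(2)]) (rule p2)
  have s3: "S h (\<lambda>l. ob (P l \<and> E1 l > 0 \<and> E2 l > 0)) = 2 * S h (\<lambda>l. ob (P l \<and> E1 l > 0 \<and> E2 l > 0 \<and> E3 l > 0))"
    by (rule S_fold2[OF h flips_weyl(3)]) (rule p3)
  show ?thesis unfolding s1 s2 s3 by simp
qed

lemma A_S3: "8 dvd S h (\<lambda>l. ob (S3 l))"
  by (rule A_spin[OF stable_cls(3)]) (use spin_odd in blast)
lemma A_S4: "8 dvd S h (\<lambda>l. ob (S4 l))"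
  by (rule A_spin[OF stable_cls(4)]) (use spin_odd in blast)

lemma S_split4:
  assumes "\<And>l. G l = G1 l + G2 l + G3 l + G4 l"
  shows "S h G = S h G1 + S h G2 + S h G3 + S h G4"
proof -
  have "S h G = S h (\<lambda>l. G1 l + G2 l + G3 l + G4 l)" by (rule S_cong) (rule assms)
  then show ?thesis by (simp only: S_fadd)
qed

lemma nz_mod: "(x::int) mod 4 = 2 \<Longrightarrow> x \<noteq> 0" by auto

lemma A_vecC3: "8 dvd S h (\<lambda>l. ob (Vc l \<and> cnt l = 3))"
proof -
  have p: "ob (Vc l \<and> cnt l = 3) = ob (Vc l \<and> cnt l = 3 \<and> \<not> Od1 l) + ob (Vc l \<and> cnt l = 3 \<and> \<not> Od2 l)
     + ob (Vc l \<and> cnt l = 3 \<and> \<not> Od3 l) + ob (Vc l \<and> cnt l = 3 \<and> \<not> Od4 l)" for l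
    by (cases "Od1 l"; cases "Od2 l"; cases "Od3 l"; cases "Od4 l") (simp_all add: cnt_def)
  have e1: "S h (\<lambda>l. ob (Vc l \<and> cnt l = 3 \<and> \<not> Od1 l)) = S h (\<lambda>l. ob (Vc l \<and> cnt l = 3 \<and> \<not> Od2 l))"
    by (rule S_swap[OF h swaps_weyl(1)]) (simp add: Od_swap cnt_inv cls_s1)
  have e2: "S h (\<lambda>l. ob (Vc l \<and> cnt l = 3 \<and> \<not> Od2 l)) = S h (\<lambda>l. ob (Vc l \<and> cnt l = 3 \<and> \<not> Od3 l))"
    by (rule S_swap[OF h swaps_weyl(2)]) (simp add: Od_swap cnt_inv stableD[OF stable_cls(2) swaps_weyl(2)])
  have e3: "S h (\<lambda>l. ob (Vc l \<and> cnt l = 3 \<and> \<not> Od3 l)) = S h (\<lambda>l. ob (Vc l \<and> cnt l = 3 \<and> \<not> Od4 l))"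
    by (rule S_swap[OF h swaps_weyl(3)]) (simp add: Od_swap cnt_inv stableD[OF stable_cls(2) swaps_weyl(3)])
  have q: "ob (Vc l \<and> cnt l = 3 \<and> \<not> Od4 l) = ob (Vc l \<and> cnt l = 3 \<and> \<not> Od4 l \<and> E1 l > 0)
     + ob (Vc (f12 l) \<and> cnt (f12 l) = 3 \<and> \<not> Od4 (f12 l) \<and> E1 (f12 l) > 0)" for l
  proof -
    have "cnt l = 3 \<Longrightarrow> \<not> Od4 l \<Longrightarrow> Od1 l" by (cases "Od1 l"; cases "Od2 l"; cases "Od3 l") (simp_all add: cnt_def)
    then have "cnt l = 3 \<Longrightarrow> \<not> Od4 l \<Longrightarrow> E1 l \<noteq> 0" using nz_mod unfolding Od1_def by blast
    then show ?thesis by (auto simp: flip_E Od_flip cnt_inv stableD[OF stable_cls(2) flips_weyl(1)])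
  qed
  have f: "S h (\<lambda>l. ob (Vc l \<and> cnt l = 3 \<and> \<not> Od4 l)) = 2 * S h (\<lambda>l. ob (Vc l \<and> cnt l = 3 \<and> \<not> Od4 l \<and> E1 l > 0))"
    by (rule S_fold2[OF h flips_weyl(1)]) (rule q)
  show ?thesis unfolding S_split4[OF p] e1 e2 e3 f by simp
qed

lemma A_vec: "8 dvd S h (\<lambda>l. ob (Vc l))"
proof -
  have p: "ob (Vc l) = ob (Vc l \<and> Od1 l) + ob (Vc l \<and> Od2 l) + ob (Vc l \<and> Od3 l) + (ob (Vc l \<and> Od4 l)
     - 2 * ob (Vc l \<and> cnt l = 3))" for l
    using Vc_cnt[of l] by (cases "Od1 l"; cases "Od2 l"; cases "Od3 l"; cases "Od4 l") (auto simp: cnt_def)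
  have e1: "S h (\<lambda>l. ob (Vc l \<and> Od2 l)) = S h (\<lambda>l. ob (Vc l \<and> Od1 l))"
    by (rule S_swap[OF h swaps_weyl(1)]) (simp add: Od_swap cls_s1)
  have e2: "S h (\<lambda>l. ob (Vc l \<and> Od3 l)) = S h (\<lambda>l. ob (Vc l \<and> Od2 l))"
    by (rule S_swap[OF h swaps_weyl(2)]) (simp add: Od_swap stableD[OF stable_cls(2) swaps_weyl(2)])
  have e3: "S h (\<lambda>l. ob (Vc l \<and> Od4 l)) = S h (\<lambda>l. ob (Vc l \<and> Od3 l))"
    by (rule S_swap[OF h swaps_weyl(3)]) (simp add: Od_swap stableD[OF stable_cls(2) swaps_weyl(3)])
  have q: "ob (Vc l \<and> Od1 l) = ob (Vc l \<and> Od1 l \<and> E1 l > 0) + ob (Vc (f12 l) \<and> Od1 (f12 l) \<and> E1 (f12 l) > 0)" for l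
  proof -
    have "Od1 l \<Longrightarrow> E1 l \<noteq> 0" using nz_mod unfolding Od1_def by blast
    then show ?thesis by (auto simp: flip_E Od_flip stableD[OF stable_cls(2) flips_weyl(1)])
  qed
  have f: "S h (\<lambda>l. ob (Vc l \<and> Od1 l)) = 2 * S h (\<lambda>l. ob (Vc l \<and> Od1 l \<and> E1 l > 0))"
    by (rule S_fold2[OF h flips_weyl(1)]) (rule q)
  have "S h (\<lambda>l. ob (Vc l \<and> Od4 l) - 2 * ob (Vc l \<and> cnt l = 3)) = S h (\<lambda>l. ob (Vc l \<and> Od4 l)) - 2 * S h (\<lambda>l. ob (Vc l \<and> cnt l = 3))"
    by (simp only: S_fdiff S_fscale)
  then have "S h (\<lambda>l. ob (Vc l)) = 8 * S h (\<lambda>l. ob (Vc l \<and> Od1 l \<and> E1 l > 0)) - 2 * S h (\<lambda>l. ob (Vc l \<and> cnt l = 3))"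
    unfolding S_split4[OF p] e1 e2 e3 f by simp
  then show ?thesis using A_vecC3 by (simp add: dvd_diff)
qed

lemma F3_spin:
  assumes P: "stable P" and od: "\<And>l. P l \<Longrightarrow> odd (E1 l) \<and> odd (E2 l) \<and> odd (E3 l) \<and> odd (E4 l)"
  shows "64 dvd S h (\<lambda>l. ob (P l) * (nE l - 4))"
proof -
  have p: "ob (P l) * (nE l - 4) = ob (P l) * (E1 l^2 - 1) + ob (P l) * (E2 l^2 - 1) + ob (P l) * (E3 l^2 - 1) + ob (P l) * (E4 l^2 - 1)" for l
    by (simp add: nE_def algebra_simps)
  have e1: "S h (\<lambda>l. ob (P l) * (E2 l^2 - 1)) = S h (\<lambda>l. ob (P l) * (E1 l^2 - 1))"
    by (rule S_swap[OF h swaps_weyl(1)]) (simp add: swap_E stable_s1[OF P])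
  have e2: "S h (\<lambda>l. ob (P l) * (E3 l^2 - 1)) = S h (\<lambda>l. ob (P l) * (E2 l^2 - 1))"
    by (rule S_swap[OF h swaps_weyl(2)]) (simp add: swap_E stableD[OF P swaps_weyl(2)])
  have e3: "S h (\<lambda>l. ob (P l) * (E4 l^2 - 1)) = S h (\<lambda>l. ob (P l) * (E3 l^2 - 1))"
    by (rule S_swap[OF h swaps_weyl(3)]) (simp add: swap_E stableD[OF P swaps_weyl(3)])
  have q: "ob (P l) * (E1 l^2 - 1) = ob (P l \<and> E1 l > 0) * (E1 l^2 - 1) + ob (P (f12 l) \<and> E1 (f12 l) > 0) * (E1 (f12 l)^2 - 1)" for l
  proof -
    have "P l \<Longrightarrow> E1 l \<noteq> 0" using od[of l] by auto
    then show ?thesis by (cases "P l") (auto simp: flip_E stableD[OF P flips_weyl(1)])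
  qed
  have f: "S h (\<lambda>l. ob (P l) * (E1 l^2 - 1)) = 2 * S h (\<lambda>l. ob (P l \<and> E1 l > 0) * (E1 l^2 - 1))"
    by (rule S_fold2[OF h flips_weyl(1)]) (rule q)
  have d: "8 dvd S h (\<lambda>l. ob (P l \<and> E1 l > 0) * (E1 l^2 - 1))"
  proof (rule S_dvd)
    fix l show "8 dvd ob (P l \<and> E1 l > 0) * (E1 l^2 - 1)"
      using od[of l] odd_sq8[of "E1 l"] by (cases "P l") auto
  qed
  show ?thesis unfolding S_split4[OF p] e3 e2 e1 f using d by auto
qed

lemma F3_S3: "64 dvd S h (\<lambda>l. ob (S3 l) * (nE l - 4))"
  by (rule F3_spin[OF stable_cls(3)]) (use spin_odd in blast)
lemma F3_S4: "64 dvd S h (\<lambda>l. ob (S4 l) * (nE l - 4))"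
  by (rule F3_spin[OF stable_cls(4)]) (use spin_odd in blast)

lemma F3_vec: "64 dvd S h (\<lambda>l. ob (Vc l) * (nE l - 4))"
proof -
  let ?T1 = "\<lambda>l. ob (Vc l) * (E1 l^2 - 4 * ob (Od1 l))"
  let ?T2 = "\<lambda>l. ob (Vc l) * (E2 l^2 - 4 * ob (Od2 l))"
  let ?T3 = "\<lambda>l. ob (Vc l) * (E3 l^2 - 4 * ob (Od3 l))"
  let ?T4 = "\<lambda>l. ob (Vc l) * (E4 l^2 - 4 * ob (Od4 l)) + 8 * ob (Vc l \<and> cnt l = 3)"
  have p: "ob (Vc l) * (nE l - 4) = ?T1 l + ?T2 l + ?T3 l + ?T4 l" for l
    using Vc_cnt[of l] by (cases "Od1 l"; cases "Od2 l"; cases "Od3 l"; cases "Od4 l") (auto simp: cnt_def nE_def algebra_simps)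
  have e1: "S h ?T2 = S h ?T1"
    by (rule S_swap[OF h swaps_weyl(1)]) (simp add: swap_E Od_swap cls_s1)
  have e2: "S h ?T3 = S h ?T2"
    by (rule S_swap[OF h swaps_weyl(2)]) (simp add: swap_E Od_swap stableD[OF stable_cls(2) swaps_weyl(2)])
  have e3: "S h (\<lambda>l. ob (Vc l) * (E4 l^2 - 4 * ob (Od4 l))) = S h ?T3"
    by (rule S_swap[OF h swaps_weyl(3)]) (simp add: swap_E Od_swap stableD[OF stable_cls(2) swaps_weyl(3)])
  have t4: "S h ?T4 = S h (\<lambda>l. ob (Vc l) * (E4 l^2 - 4 * ob (Od4 l))) + 8 * S h (\<lambda>l. ob (Vc l \<and> cnt l = 3))"
    by (simp only: S_fadd S_fscale)
  have q: "?T1 l = ob (Vc l \<and> E1 l > 0) * (E1 l^2 - 4 * ob (Od1 l)) + ob (Vc (f12 l) \<and> E1 (f12 l) > 0) * (E1 (f12 l)^2 - 4 * ob (Od1 (f12 l)))" for l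
  proof -
    have "E1 l = 0 \<Longrightarrow> \<not> Od1 l" unfolding Od1_def by simp
    then show ?thesis by (cases "E1 l = 0") (auto simp: flip_E Od_flip stableD[OF stable_cls(2) flips_weyl(1)])
  qed
  have f: "S h ?T1 = 2 * S h (\<lambda>l. ob (Vc l \<and> E1 l > 0) * (E1 l^2 - 4 * ob (Od1 l)))"
    by (rule S_fold2[OF h flips_weyl(1)]) (rule q)
  have d: "16 dvd S h (\<lambda>l. ob (Vc l \<and> E1 l > 0) * (E1 l^2 - 4 * ob (Od1 l)))"
  proof (rule S_dvd)
    fix l show "16 dvd ob (Vc l \<and> E1 l > 0) * (E1 l^2 - 4 * ob (Od1 l))"
    proof (cases "Vc l")
      case True
      then have ev: "even (E1 l)" by (rule Vc_even)
      show ?thesis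
      proof (cases "Od1 l")
        case True
        then have "32 dvd E1 l^2 - 4" using od_sq32 unfolding Od1_def by blast
        then show ?thesis using True by (auto elim: dvd_trans[rotated] intro: dvd_mult2)
      next
        case False
        then have "16 dvd E1 l^2" using ev_sq16[OF ev] unfolding Od1_def by blast
        then show ?thesis using False by auto
      qed
    qed simp
  qed
  have "S h (\<lambda>l. ob (Vc l) * (nE l - 4)) = 8 * S h (\<lambda>l. ob (Vc l \<and> E1 l > 0) * (E1 l^2 - 4 * ob (Od1 l)))
     + 8 * S h (\<lambda>l. ob (Vc l \<and> cnt l = 3))"
    unfolding S_split4[OF p] t4 e3 e2 e1 f by simp
  moreover obtain k where "S h (\<lambda>l. ob (Vc l \<and> E1 l > 0) * (E1 l^2 - 4 * ob (Od1 l))) = 16 * k" using d by blast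
  moreover obtain j where "S h (\<lambda>l. ob (Vc l \<and> cnt l = 3)) = 8 * j" using A_vecC3 by blast
  ultimately have "S h (\<lambda>l. ob (Vc l) * (nE l - 4)) = 64 * (2 * k + j)" by simp
  then show ?thesis by simp
qed

lemma F1_Fp: "even (S h (\<lambda>l. ob (Rt l \<and> E1 l > 0 \<and> Od1 l)))"
proof -
  let ?F = "\<lambda>l. Rt l \<and> E1 l > 0 \<and> Od1 l"
  have p: "ob (?F l) = ob (?F l \<and> Od2 l) + ob (?F l \<and> Od3 l) + ob (?F l \<and> Od4 l) + (- 2 * ob (?F l \<and> Od2 l \<and> Od3 l \<and> Od4 l))" for l
    using Rt_cnt[of l] by (cases "Od2 l"; cases "Od3 l"; cases "Od4 l") auto
  have e2: "S h (\<lambda>l. ob (?F l \<and> Od3 l)) = S h (\<lambda>l. ob (?F l \<and> Od2 l))"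
    by (rule S_swap[OF h swaps_weyl(2)]) (simp add: swap_E Od_swap stableD[OF stable_cls(1) swaps_weyl(2)])
  have e3: "S h (\<lambda>l. ob (?F l \<and> Od4 l)) = S h (\<lambda>l. ob (?F l \<and> Od3 l))"
    by (rule S_swap[OF h swaps_weyl(3)]) (simp add: swap_E Od_swap stableD[OF stable_cls(1) swaps_weyl(3)])
  have q: "ob (?F l \<and> Od2 l) = ob (?F l \<and> Od2 l \<and> E2 l > 0) + ob (?F (f23 l) \<and> Od2 (f23 l) \<and> E2 (f23 l) > 0)" for l
  proof -
    have "Od2 l \<Longrightarrow> E2 l \<noteq> 0" using nz_mod unfolding Od2_def by blast
    then show ?thesis by (auto simp: flip_E Od_flip stableD[OF stable_cls(1) flips_weyl(2)])
  qed
  have f: "S h (\<lambda>l. ob (?F l \<and> Od2 l)) = 2 * S h (\<lambda>l. ob (?F l \<and> Od2 l \<and> E2 l > 0))"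
    by (rule S_fold2[OF h flips_weyl(2)]) (rule q)
  have "S h (\<lambda>l. - 2 * ob (?F l \<and> Od2 l \<and> Od3 l \<and> Od4 l)) = - 2 * S h (\<lambda>l. ob (?F l \<and> Od2 l \<and> Od3 l \<and> Od4 l))"
    by (rule S_fscale)
  then have "S h (\<lambda>l. ob (?F l)) = 2 * (3 * S h (\<lambda>l. ob (?F l \<and> Od2 l \<and> E2 l > 0)) - S h (\<lambda>l. ob (?F l \<and> Od2 l \<and> Od3 l \<and> Od4 l)))"
    unfolding S_split4[OF p] e3 e2 f by simp
  then show ?thesis by simp
qed

lemma F1: "64 dvd S h (\<lambda>l. ob (Rt l) * nE l)"
proof -
  let ?T1 = "\<lambda>l. ob (Rt l) * E1 l^2"
  let ?T2 = "\<lambda>l. ob (Rt l) * E2 l^2"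
  let ?T3 = "\<lambda>l. ob (Rt l) * E3 l^2"
  let ?T4 = "\<lambda>l. ob (Rt l) * E4 l^2"
  have p: "ob (Rt l) * nE l = ?T1 l + ?T2 l + ?T3 l + ?T4 l" for l
    by (simp add: nE_def algebra_simps)
  have e1: "S h ?T2 = S h ?T1"
    by (rule S_swap[OF h swaps_weyl(1)]) (simp add: swap_E cls_s1)
  have e2: "S h ?T3 = S h ?T2"
    by (rule S_swap[OF h swaps_weyl(2)]) (simp add: swap_E stableD[OF stable_cls(1) swaps_weyl(2)])
  have e3: "S h ?T4 = S h ?T3"
    by (rule S_swap[OF h swaps_weyl(3)]) (simp add: swap_E stableD[OF stable_cls(1) swaps_weyl(3)])
  have q: "?T1 l = ob (Rt l \<and> E1 l > 0) * E1 l^2 + ob (Rt (f12 l) \<and> E1 (f12 l) > 0) * E1 (f12 l)^2" for l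
    by (cases "E1 l = 0") (auto simp: flip_E stableD[OF stable_cls(1) flips_weyl(1)])
  have f: "S h ?T1 = 2 * S h (\<lambda>l. ob (Rt l \<and> E1 l > 0) * E1 l^2)"
    by (rule S_fold2[OF h flips_weyl(1)]) (rule q)
  have r: "ob (Rt l \<and> E1 l > 0) * E1 l^2 = 4 * ob (Rt l \<and> E1 l > 0 \<and> Od1 l) + ob (Rt l \<and> E1 l > 0) * (E1 l^2 - 4 * ob (Od1 l))" for l
    by (cases "Od1 l") auto
  have d: "16 dvd S h (\<lambda>l. ob (Rt l \<and> E1 l > 0) * (E1 l^2 - 4 * ob (Od1 l)))"
  proof (rule S_dvd)
    fix l show "16 dvd ob (Rt l \<and> E1 l > 0) * (E1 l^2 - 4 * ob (Od1 l))"
    proof (cases "Rt l")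
      case True
      then have ev: "even (E1 l)" by (rule Rt_even)
      show ?thesis
      proof (cases "Od1 l")
        case True
        then have "32 dvd E1 l^2 - 4" using od_sq32 unfolding Od1_def by blast
        then have "16 dvd E1 l^2 - 4" by (rule dvd_trans[rotated]) simp
        then show ?thesis using True by simp
      next
        case False
        then have "16 dvd E1 l^2" using ev_sq16[OF ev] unfolding Od1_def by blast
        then show ?thesis using False by auto
      qed
    qed simp
  qed
  have "S h (\<lambda>l. ob (Rt l \<and> E1 l > 0) * E1 l^2) = 4 * S h (\<lambda>l. ob (Rt l \<and> E1 l > 0 \<and> Od1 l))
     + S h (\<lambda>l. ob (Rt l \<and> E1 l > 0) * (E1 l^2 - 4 * ob (Od1 l)))"
    unfolding r by (simp only: S_fadd S_fscale)
  moreover obtain k where "S h (\<lambda>l. ob (Rt l \<and> E1 l > 0) * (E1 l^2 - 4 * ob (Od1 l))) = 16 * k" using d by blast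
  moreover obtain j where "S h (\<lambda>l. ob (Rt l \<and> E1 l > 0 \<and> Od1 l)) = 2 * j" using F1_Fp by blast
  ultimately have "S h (\<lambda>l. ob (Rt l \<and> E1 l > 0) * E1 l^2) = 8 * (j + 2 * k)" by simp
  then have "S h (\<lambda>l. ob (Rt l) * nE l) = 64 * (j + 2 * k)"
    unfolding S_split4[OF p] e3 e2 e1 f by simp
  then show ?thesis by simp
qed

end

definition ell4 :: "wt \<Rightarrow> int" where "ell4 l = (case l of (a,b,c,d) \<Rightarrow> a + 2*b + c + d)"
definition Psi4 :: "wt \<Rightarrow> int" where "Psi4 l = 4 * ell4 l + ob (Rt l) * nE l"

lemma S_const: "S F (\<lambda>_. c) = c * aug F"
  using S_fscale[of F c "\<lambda>_. 1"] by (simp add: aug_S)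

lemma E_add: "E1 (x + y) = E1 x + E1 y" "E2 (x + y) = E2 x + E2 y" "E3 (x + y) = E3 x + E3 y" "E4 (x + y) = E4 x + E4 y"
  by (cases x; cases y; simp add: Edefs)+

lemma ell4_add: "ell4 (x + y) = ell4 x + ell4 y" by (cases x; cases y; simp add: ell4_def)
lemma ell4_E: "2 * ell4 l = E1 l + E2 l" by (cases l) (simp add: ell4_def Edefs)

lemma cls_add:
  "Rt x \<Longrightarrow> Rt (x + y) = Rt y" "Vc x \<Longrightarrow> Rt (x + y) = Vc y"
  "S3 x \<Longrightarrow> Rt (x + y) = S3 y" "S4 x \<Longrightarrow> Rt (x + y) = S4 y"
  by (cases x; cases y; simp add: Cdefs; presburger)+

lemma cls_all: "Rt x \<or> Vc x \<or> S3 x \<or> S4 x"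
  by (cases x) (simp add: Cdefs; presburger)

lemma cls_sum: "ob (Rt x) + ob (Vc x) + ob (S3 x) + ob (S4 x) = 1"
  by (cases x) (simp add: Cdefs; presburger)

lemma nE_formula: "nE (a,b,c,d) = 4 * (a^2+2*b^2+c^2+d^2+2*a*b+a*c+a*d+2*b*c+2*b*d+c*d)"
  by (simp add: nE_def Edefs power2_eq_square algebra_simps)

lemma nE_Rt: "Rt x \<Longrightarrow> 8 dvd nE x"
proof -
  obtain a b c d where x: "x = (a,b,c,d)" by (cases x) auto
  assume "Rt x"
  then have p: "even (c+d)" "even (a+c)" by (simp_all add: x Rt_def)
  have "even (a^2+2*b^2+c^2+d^2+2*a*b+a*c+a*d+2*b*c+2*b*d+c*d)"
    using p by (cases "even a"; cases "even c"; cases "even d") simp_all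
  then obtain k where "a^2+2*b^2+c^2+d^2+2*a*b+a*c+a*d+2*b*c+2*b*d+c*d = 2 * k" by blast
  then show ?thesis unfolding x nE_formula by simp
qed

lemma nE_non: "Vc x \<or> S3 x \<or> S4 x \<Longrightarrow> 8 dvd nE x + 4"
proof -
  obtain a b c d where x: "x = (a,b,c,d)" by (cases x) auto
  assume "Vc x \<or> S3 x \<or> S4 x"
  then have p: "(even (c+d) \<and> odd (a+c)) \<or> (odd (c+d) \<and> even (a+d)) \<or> (odd (c+d) \<and> odd (a+d))"
    by (simp add: x Cdefs)
  have "odd (a^2+2*b^2+c^2+d^2+2*a*b+a*c+a*d+2*b*c+2*b*d+c*d)"
    using p by (cases "even a"; cases "even c"; cases "even d") simp_all
  then obtain k where "a^2+2*b^2+c^2+d^2+2*a*b+a*c+a*d+2*b*c+2*b*d+c*d = 2 * k + 1" by (metis oddE)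
  then have "nE x + 4 = 8 * (k + 1)" unfolding x nE_formula by simp
  then show ?thesis by simp
qed

context
  fixes h :: grpring
  assumes h: "W_invariant h" and h0: "aug h = 0"
begin

lemma S_ell4: "S h ell4 = 0"
proof -
  have "2 * S h ell4 = S h (\<lambda>l. 2 * ell4 l)" by (rule S_fscale[symmetric])
  also have "\<dots> = S h (\<lambda>l. E1 l + E2 l)" by (rule S_cong) (rule ell4_E)
  also have "\<dots> = 0" by (simp only: S_fadd F0lin_all[OF h])
  finally show ?thesis by simp
qed

lemma gen_core:
  assumes P: "stable P" and eq: "\<And>y. Rt (x + y) = P y"
  shows "S h (\<lambda>y. Psi4 (x + y)) = nE x * S h (\<lambda>y. ob (P y)) + S h (\<lambda>y. ob (P y) * nE y)"
proof -
  have pt: "Psi4 (x + y) = 4 * ell4 x + 4 * ell4 y + nE x * ob (P y) + 2 * E1 x * (ob (P y) * E1 y)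
     + 2 * E2 x * (ob (P y) * E2 y) + 2 * E3 x * (ob (P y) * E3 y) + 2 * E4 x * (ob (P y) * E4 y)
     + ob (P y) * nE y" for y
    by (simp add: Psi4_def eq ell4_add nE_def E_add power2_eq_square algebra_simps)
  have "S h (\<lambda>y. Psi4 (x + y)) = S h (\<lambda>y. 4 * ell4 x + 4 * ell4 y + nE x * ob (P y) + 2 * E1 x * (ob (P y) * E1 y)
     + 2 * E2 x * (ob (P y) * E2 y) + 2 * E3 x * (ob (P y) * E3 y) + 2 * E4 x * (ob (P y) * E4 y)
     + ob (P y) * nE y)" by (rule S_cong) (rule pt)
  also have "\<dots> = nE x * S h (\<lambda>y. ob (P y)) + S h (\<lambda>y. ob (P y) * nE y)"
    by (simp only: S_fadd S_fscale S_const h0 S_ell4 F0lin[OF h P])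
  finally show ?thesis .
qed

lemma gen_dvd: "64 dvd S h (\<lambda>y. Psi4 (x + y))"
proof -
  have A: "8 dvd S h (\<lambda>y. ob (Vc y))" "8 dvd S h (\<lambda>y. ob (S3 y))" "8 dvd S h (\<lambda>y. ob (S4 y))"
    using A_vec[OF h] A_S3[OF h] A_S4[OF h] by auto
  have sumA: "S h (\<lambda>y. ob (Rt y)) + S h (\<lambda>y. ob (Vc y)) + S h (\<lambda>y. ob (S3 y)) + S h (\<lambda>y. ob (S4 y)) = 0"
  proof -
    have "S h (\<lambda>y. ob (Rt y)) + S h (\<lambda>y. ob (Vc y)) + S h (\<lambda>y. ob (S3 y)) + S h (\<lambda>y. ob (S4 y))
        = S h (\<lambda>y. ob (Rt y) + ob (Vc y) + ob (S3 y) + ob (S4 y))" by (simp only: S_fadd)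
    also have "\<dots> = S h (\<lambda>_. 1)" by (simp only: cls_sum)
    finally show ?thesis using h0 by (simp add: aug_S)
  qed
  have key: "64 dvd nE x * S h (\<lambda>y. ob (P y)) + S h (\<lambda>y. ob (P y) * nE y)"
    if "P = Vc \<or> P = S3 \<or> P = S4" "P x" for P
  proof -
    have a: "8 dvd S h (\<lambda>y. ob (P y))" using that(1) A by auto
    have b: "64 dvd S h (\<lambda>y. ob (P y) * (nE y - 4))" using that(1) F3_vec[OF h] F3_S3[OF h] F3_S4[OF h] by auto
    have c: "8 dvd nE x + 4" using that nE_non[of x] by auto
    have "S h (\<lambda>y. ob (P y) * (nE y - 4)) = S h (\<lambda>y. ob (P y) * nE y) - 4 * S h (\<lambda>y. ob (P y))"
      by (simp only: right_diff_distrib S_fdiff mult.commute[of _ 4] S_fscale)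
    then have "nE x * S h (\<lambda>y. ob (P y)) + S h (\<lambda>y. ob (P y) * nE y)
       = (nE x + 4) * S h (\<lambda>y. ob (P y)) + S h (\<lambda>y. ob (P y) * (nE y - 4))"
      by (simp add: algebra_simps)
    moreover have "64 dvd (nE x + 4) * S h (\<lambda>y. ob (P y))"
      using mult_dvd_mono[OF c a] by simp
    ultimately show ?thesis using b by simp
  qed
  consider "Rt x" | "Vc x" | "S3 x" | "S4 x" using cls_all by blast
  then show ?thesis
  proof cases
    case 1
    have "S h (\<lambda>y. Psi4 (x + y)) = nE x * S h (\<lambda>y. ob (Rt y)) + S h (\<lambda>y. ob (Rt y) * nE y)"
      by (rule gen_core[OF stable_cls(1)]) (rule cls_add(1)[OF 1])
    moreover have "8 dvd S h (\<lambda>y. ob (Rt y))"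
    proof -
      have "S h (\<lambda>y. ob (Rt y)) = - (S h (\<lambda>y. ob (Vc y)) + S h (\<lambda>y. ob (S3 y)) + S h (\<lambda>y. ob (S4 y)))"
        using sumA by simp
      then show ?thesis using A by simp
    qed
    moreover have "8 dvd nE x" using nE_Rt[OF 1] .
    ultimately show ?thesis using F1[OF h] mult_dvd_mono[of 8 "nE x" 8 "S h (\<lambda>y. ob (Rt y))"] by simp
  next
    case 2
    have "S h (\<lambda>y. Psi4 (x + y)) = nE x * S h (\<lambda>y. ob (Vc y)) + S h (\<lambda>y. ob (Vc y) * nE y)"
      by (rule gen_core[OF stable_cls(2)]) (rule cls_add(2)[OF 2])
    then show ?thesis using key[of Vc] 2 by simp
  next
    case 3
    have "S h (\<lambda>y. Psi4 (x + y)) = nE x * S h (\<lambda>y. ob (S3 y)) + S h (\<lambda>y. ob (S3 y) * nE y)"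
      by (rule gen_core[OF stable_cls(3)]) (rule cls_add(3)[OF 3])
    then show ?thesis using key[of S3] 3 by simp
  next
    case 4
    have "S h (\<lambda>y. Psi4 (x + y)) = nE x * S h (\<lambda>y. ob (S4 y)) + S h (\<lambda>y. ob (S4 y) * nE y)"
      by (rule gen_core[OF stable_cls(4)]) (rule cls_add(4)[OF 4])
    then show ?thesis using key[of S4] 4 by simp
  qed
qed

end

definition phi :: "mon \<Rightarrow> wt \<Rightarrow> int" where "phi m l = Poly_Mapping.lookup (CP l) m"

lemma tri8: "8 * tri a = 4 * a^2 + 4 * a"
  using tri2[of a] by (simp add: power2_eq_square algebra_simps)

lemmas CP_lookups1 = CP_lookups[unfolded One_nat_def]

lemma tri8b: "tri a * 8 = 4 * a^2 + 4 * a"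
  using tri8[of a] by (simp add: mult.commute)

lemma tri_add: "tri (x + y) = tri x + tri y + x * y"
  using tri2[of x] tri2[of y] tri2[of "x+y"] by (simp add: algebra_simps)

lemma mdeg2: "mdeg m = 2 \<Longrightarrow> m \<in> {(2,0,0,0),(0,2,0,0),(0,0,2,0),(0,0,0,2),(1,1,0,0),(1,0,1,0),(1,0,0,1),(0,1,1,0),(0,1,0,1),(0,0,1,1)}"
proof -
  obtain a b c d where m: "m = (a,b,c,d)" by (cases m) auto
  assume "mdeg m = 2"
  then have s: "a + b + c + d = 2" by (simp add: m mdeg_def)
  have "a \<le> 2" "b \<le> 2" "c \<le> 2" using s by auto
  then have "(a = 0 \<or> a = 1 \<or> a = 2) \<and> (b = 0 \<or> b = 1 \<or> b = 2) \<and> (c = 0 \<or> c = 1 \<or> c = 2)" by auto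
  then show ?thesis using s unfolding m
    by (elim conjE disjE) simp_all
qed

definition qc :: "mon \<Rightarrow> int" where
  "qc m = (if m \<in> {(2,0,0,0),(0,2,0,0),(0,0,2,0),(0,0,0,2)} then 1
     else if m \<in> {(1,1,0,0),(0,1,1,0),(0,1,0,1)} then -1 else 0)"

lemma phi_inv:
  assumes h: "W_invariant h" and m: "mdeg m = 2"
  shows "S h (phi m) = qc m * S h (phi (2,0,0,0))"
proof -
  have m0: "8 * S h (phi (2,0,0,0)) = 2 * S h (\<lambda>l. E1 l^2)"
  proof -
    have "8 * S h (phi (2,0,0,0)) = S h (\<lambda>l. (1)*E1 l^2 + (1)*E2 l^2 + (0)*E3 l^2 + (0)*E4 l^2 + (-2)*(E1 l*E2 l) + (0)*(E1 l*E3 l) + (0)*(E1 l*E4 l) + (0)*(E2 l*E3 l) + (0)*(E2 l*E4 l) + (0)*(E3 l*E4 l) + (2)*E1 l + (-2)*E2 l + (0)*E3 l + (0)*E4 l)"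
    proof -
      have pm: "8 * phi (2,0,0,0) l = (1)*E1 l^2 + (1)*E2 l^2 + (0)*E3 l^2 + (0)*E4 l^2 + (-2)*(E1 l*E2 l) + (0)*(E1 l*E3 l) + (0)*(E1 l*E4 l) + (0)*(E2 l*E3 l) + (0)*(E2 l*E4 l) + (0)*(E3 l*E4 l) + (2)*E1 l + (-2)*E2 l + (0)*E3 l + (0)*E4 l" for l
        by (cases l) (simp add: phi_def CP_lookups CP_lookups1 Edefs tri8 tri8b power2_eq_square algebra_simps)
      show ?thesis unfolding S_fscale[symmetric] by (rule S_cong) (rule pm)
    qed
    also have "\<dots> = 2 * S h (\<lambda>l. E1 l^2)" by (subst quadS[OF h]) simp
    finally show ?thesis .
  qed
  have m1: "8 * S h (phi (0,2,0,0)) = 2 * S h (\<lambda>l. E1 l^2)"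
  proof -
    have "8 * S h (phi (0,2,0,0)) = S h (\<lambda>l. (0)*E1 l^2 + (1)*E2 l^2 + (1)*E3 l^2 + (0)*E4 l^2 + (0)*(E1 l*E2 l) + (0)*(E1 l*E3 l) + (0)*(E1 l*E4 l) + (-2)*(E2 l*E3 l) + (0)*(E2 l*E4 l) + (0)*(E3 l*E4 l) + (0)*E1 l + (2)*E2 l + (-2)*E3 l + (0)*E4 l)"
    proof -
      have pm: "8 * phi (0,2,0,0) l = (0)*E1 l^2 + (1)*E2 l^2 + (1)*E3 l^2 + (0)*E4 l^2 + (0)*(E1 l*E2 l) + (0)*(E1 l*E3 l) + (0)*(E1 l*E4 l) + (-2)*(E2 l*E3 l) + (0)*(E2 l*E4 l) + (0)*(E3 l*E4 l) + (0)*E1 l + (2)*E2 l + (-2)*E3 l + (0)*E4 l" for l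
        by (cases l) (simp add: phi_def CP_lookups CP_lookups1 Edefs tri8 tri8b power2_eq_square algebra_simps)
      show ?thesis unfolding S_fscale[symmetric] by (rule S_cong) (rule pm)
    qed
    also have "\<dots> = 2 * S h (\<lambda>l. E1 l^2)" by (subst quadS[OF h]) simp
    finally show ?thesis .
  qed
  have m2: "8 * S h (phi (0,0,2,0)) = 2 * S h (\<lambda>l. E1 l^2)"
  proof -
    have "8 * S h (phi (0,0,2,0)) = S h (\<lambda>l. (0)*E1 l^2 + (0)*E2 l^2 + (1)*E3 l^2 + (1)*E4 l^2 + (0)*(E1 l*E2 l) + (0)*(E1 l*E3 l) + (0)*(E1 l*E4 l) + (0)*(E2 l*E3 l) + (0)*(E2 l*E4 l) + (-2)*(E3 l*E4 l) + (0)*E1 l + (0)*E2 l + (2)*E3 l + (-2)*E4 l)"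
    proof -
      have pm: "8 * phi (0,0,2,0) l = (0)*E1 l^2 + (0)*E2 l^2 + (1)*E3 l^2 + (1)*E4 l^2 + (0)*(E1 l*E2 l) + (0)*(E1 l*E3 l) + (0)*(E1 l*E4 l) + (0)*(E2 l*E3 l) + (0)*(E2 l*E4 l) + (-2)*(E3 l*E4 l) + (0)*E1 l + (0)*E2 l + (2)*E3 l + (-2)*E4 l" for l
        by (cases l) (simp add: phi_def CP_lookups CP_lookups1 Edefs tri8 tri8b power2_eq_square algebra_simps)
      show ?thesis unfolding S_fscale[symmetric] by (rule S_cong) (rule pm)
    qed
    also have "\<dots> = 2 * S h (\<lambda>l. E1 l^2)" by (subst quadS[OF h]) simp
    finally show ?thesis .
  qed
  have m3: "8 * S h (phi (0,0,0,2)) = 2 * S h (\<lambda>l. E1 l^2)"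
  proof -
    have "8 * S h (phi (0,0,0,2)) = S h (\<lambda>l. (0)*E1 l^2 + (0)*E2 l^2 + (1)*E3 l^2 + (1)*E4 l^2 + (0)*(E1 l*E2 l) + (0)*(E1 l*E3 l) + (0)*(E1 l*E4 l) + (0)*(E2 l*E3 l) + (0)*(E2 l*E4 l) + (2)*(E3 l*E4 l) + (0)*E1 l + (0)*E2 l + (2)*E3 l + (2)*E4 l)"
    proof -
      have pm: "8 * phi (0,0,0,2) l = (0)*E1 l^2 + (0)*E2 l^2 + (1)*E3 l^2 + (1)*E4 l^2 + (0)*(E1 l*E2 l) + (0)*(E1 l*E3 l) + (0)*(E1 l*E4 l) + (0)*(E2 l*E3 l) + (0)*(E2 l*E4 l) + (2)*(E3 l*E4 l) + (0)*E1 l + (0)*E2 l + (2)*E3 l + (2)*E4 l" for l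
        by (cases l) (simp add: phi_def CP_lookups CP_lookups1 Edefs tri8 tri8b power2_eq_square algebra_simps)
      show ?thesis unfolding S_fscale[symmetric] by (rule S_cong) (rule pm)
    qed
    also have "\<dots> = 2 * S h (\<lambda>l. E1 l^2)" by (subst quadS[OF h]) simp
    finally show ?thesis .
  qed
  have m4: "8 * S h (phi (1,1,0,0)) = -2 * S h (\<lambda>l. E1 l^2)"
  proof -
    have "8 * S h (phi (1,1,0,0)) = S h (\<lambda>l. (0)*E1 l^2 + (-2)*E2 l^2 + (0)*E3 l^2 + (0)*E4 l^2 + (2)*(E1 l*E2 l) + (-2)*(E1 l*E3 l) + (0)*(E1 l*E4 l) + (2)*(E2 l*E3 l) + (0)*(E2 l*E4 l) + (0)*(E3 l*E4 l) + (0)*E1 l + (0)*E2 l + (0)*E3 l + (0)*E4 l)"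
    proof -
      have pm: "8 * phi (1,1,0,0) l = (0)*E1 l^2 + (-2)*E2 l^2 + (0)*E3 l^2 + (0)*E4 l^2 + (2)*(E1 l*E2 l) + (-2)*(E1 l*E3 l) + (0)*(E1 l*E4 l) + (2)*(E2 l*E3 l) + (0)*(E2 l*E4 l) + (0)*(E3 l*E4 l) + (0)*E1 l + (0)*E2 l + (0)*E3 l + (0)*E4 l" for l
        by (cases l) (simp add: phi_def CP_lookups CP_lookups1 Edefs tri8 tri8b power2_eq_square algebra_simps)
      show ?thesis unfolding S_fscale[symmetric] by (rule S_cong) (rule pm)
    qed
    also have "\<dots> = -2 * S h (\<lambda>l. E1 l^2)" by (subst quadS[OF h]) simp
    finally show ?thesis .
  qed
  have m5: "8 * S h (phi (1,0,1,0)) = 0 * S h (\<lambda>l. E1 l^2)"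
  proof -
    have "8 * S h (phi (1,0,1,0)) = S h (\<lambda>l. (0)*E1 l^2 + (0)*E2 l^2 + (0)*E3 l^2 + (0)*E4 l^2 + (0)*(E1 l*E2 l) + (2)*(E1 l*E3 l) + (-2)*(E1 l*E4 l) + (-2)*(E2 l*E3 l) + (2)*(E2 l*E4 l) + (0)*(E3 l*E4 l) + (0)*E1 l + (0)*E2 l + (0)*E3 l + (0)*E4 l)"
    proof -
      have pm: "8 * phi (1,0,1,0) l = (0)*E1 l^2 + (0)*E2 l^2 + (0)*E3 l^2 + (0)*E4 l^2 + (0)*(E1 l*E2 l) + (2)*(E1 l*E3 l) + (-2)*(E1 l*E4 l) + (-2)*(E2 l*E3 l) + (2)*(E2 l*E4 l) + (0)*(E3 l*E4 l) + (0)*E1 l + (0)*E2 l + (0)*E3 l + (0)*E4 l" for l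
        by (cases l) (simp add: phi_def CP_lookups CP_lookups1 Edefs tri8 tri8b power2_eq_square algebra_simps)
      show ?thesis unfolding S_fscale[symmetric] by (rule S_cong) (rule pm)
    qed
    also have "\<dots> = 0 * S h (\<lambda>l. E1 l^2)" by (subst quadS[OF h]) simp
    finally show ?thesis .
  qed
  have m6: "8 * S h (phi (1,0,0,1)) = 0 * S h (\<lambda>l. E1 l^2)"
  proof -
    have "8 * S h (phi (1,0,0,1)) = S h (\<lambda>l. (0)*E1 l^2 + (0)*E2 l^2 + (0)*E3 l^2 + (0)*E4 l^2 + (0)*(E1 l*E2 l) + (2)*(E1 l*E3 l) + (2)*(E1 l*E4 l) + (-2)*(E2 l*E3 l) + (-2)*(E2 l*E4 l) + (0)*(E3 l*E4 l) + (0)*E1 l + (0)*E2 l + (0)*E3 l + (0)*E4 l)"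
    proof -
      have pm: "8 * phi (1,0,0,1) l = (0)*E1 l^2 + (0)*E2 l^2 + (0)*E3 l^2 + (0)*E4 l^2 + (0)*(E1 l*E2 l) + (2)*(E1 l*E3 l) + (2)*(E1 l*E4 l) + (-2)*(E2 l*E3 l) + (-2)*(E2 l*E4 l) + (0)*(E3 l*E4 l) + (0)*E1 l + (0)*E2 l + (0)*E3 l + (0)*E4 l" for l
        by (cases l) (simp add: phi_def CP_lookups CP_lookups1 Edefs tri8 tri8b power2_eq_square algebra_simps)
      show ?thesis unfolding S_fscale[symmetric] by (rule S_cong) (rule pm)
    qed
    also have "\<dots> = 0 * S h (\<lambda>l. E1 l^2)" by (subst quadS[OF h]) simp
    finally show ?thesis .
  qed
  have m7: "8 * S h (phi (0,1,1,0)) = -2 * S h (\<lambda>l. E1 l^2)"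
  proof -
    have "8 * S h (phi (0,1,1,0)) = S h (\<lambda>l. (0)*E1 l^2 + (0)*E2 l^2 + (-2)*E3 l^2 + (0)*E4 l^2 + (0)*(E1 l*E2 l) + (0)*(E1 l*E3 l) + (0)*(E1 l*E4 l) + (2)*(E2 l*E3 l) + (-2)*(E2 l*E4 l) + (2)*(E3 l*E4 l) + (0)*E1 l + (0)*E2 l + (0)*E3 l + (0)*E4 l)"
    proof -
      have pm: "8 * phi (0,1,1,0) l = (0)*E1 l^2 + (0)*E2 l^2 + (-2)*E3 l^2 + (0)*E4 l^2 + (0)*(E1 l*E2 l) + (0)*(E1 l*E3 l) + (0)*(E1 l*E4 l) + (2)*(E2 l*E3 l) + (-2)*(E2 l*E4 l) + (2)*(E3 l*E4 l) + (0)*E1 l + (0)*E2 l + (0)*E3 l + (0)*E4 l" for l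
        by (cases l) (simp add: phi_def CP_lookups CP_lookups1 Edefs tri8 tri8b power2_eq_square algebra_simps)
      show ?thesis unfolding S_fscale[symmetric] by (rule S_cong) (rule pm)
    qed
    also have "\<dots> = -2 * S h (\<lambda>l. E1 l^2)" by (subst quadS[OF h]) simp
    finally show ?thesis .
  qed
  have m8: "8 * S h (phi (0,1,0,1)) = -2 * S h (\<lambda>l. E1 l^2)"
  proof -
    have "8 * S h (phi (0,1,0,1)) = S h (\<lambda>l. (0)*E1 l^2 + (0)*E2 l^2 + (-2)*E3 l^2 + (0)*E4 l^2 + (0)*(E1 l*E2 l) + (0)*(E1 l*E3 l) + (0)*(E1 l*E4 l) + (2)*(E2 l*E3 l) + (2)*(E2 l*E4 l) + (-2)*(E3 l*E4 l) + (0)*E1 l + (0)*E2 l + (0)*E3 l + (0)*E4 l)"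
    proof -
      have pm: "8 * phi (0,1,0,1) l = (0)*E1 l^2 + (0)*E2 l^2 + (-2)*E3 l^2 + (0)*E4 l^2 + (0)*(E1 l*E2 l) + (0)*(E1 l*E3 l) + (0)*(E1 l*E4 l) + (2)*(E2 l*E3 l) + (2)*(E2 l*E4 l) + (-2)*(E3 l*E4 l) + (0)*E1 l + (0)*E2 l + (0)*E3 l + (0)*E4 l" for l
        by (cases l) (simp add: phi_def CP_lookups CP_lookups1 Edefs tri8 tri8b power2_eq_square algebra_simps)
      show ?thesis unfolding S_fscale[symmetric] by (rule S_cong) (rule pm)
    qed
    also have "\<dots> = -2 * S h (\<lambda>l. E1 l^2)" by (subst quadS[OF h]) simp
    finally show ?thesis .
  qed
  have m9: "8 * S h (phi (0,0,1,1)) = 0 * S h (\<lambda>l. E1 l^2)"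
  proof -
    have "8 * S h (phi (0,0,1,1)) = S h (\<lambda>l. (0)*E1 l^2 + (0)*E2 l^2 + (2)*E3 l^2 + (-2)*E4 l^2 + (0)*(E1 l*E2 l) + (0)*(E1 l*E3 l) + (0)*(E1 l*E4 l) + (0)*(E2 l*E3 l) + (0)*(E2 l*E4 l) + (0)*(E3 l*E4 l) + (0)*E1 l + (0)*E2 l + (0)*E3 l + (0)*E4 l)"
    proof -
      have pm: "8 * phi (0,0,1,1) l = (0)*E1 l^2 + (0)*E2 l^2 + (2)*E3 l^2 + (-2)*E4 l^2 + (0)*(E1 l*E2 l) + (0)*(E1 l*E3 l) + (0)*(E1 l*E4 l) + (0)*(E2 l*E3 l) + (0)*(E2 l*E4 l) + (0)*(E3 l*E4 l) + (0)*E1 l + (0)*E2 l + (0)*E3 l + (0)*E4 l" for l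
        by (cases l) (simp add: phi_def CP_lookups CP_lookups1 Edefs tri8 tri8b power2_eq_square algebra_simps)
      show ?thesis unfolding S_fscale[symmetric] by (rule S_cong) (rule pm)
    qed
    also have "\<dots> = 0 * S h (\<lambda>l. E1 l^2)" by (subst quadS[OF h]) simp
    finally show ?thesis .
  qed
  show ?thesis using mdeg2[OF m] m0 m1 m2 m3 m4 m5 m6 m7 m8 m9 by (auto simp: qc_def)
qed

definition fa :: "wt \<Rightarrow> int" where "fa l = (case l of (a,b,c,d) \<Rightarrow> a)"
definition fb :: "wt \<Rightarrow> int" where "fb l = (case l of (a,b,c,d) \<Rightarrow> b)"
definition fc :: "wt \<Rightarrow> int" where "fc l = (case l of (a,b,c,d) \<Rightarrow> c)"
definition fd :: "wt \<Rightarrow> int" where "fd l = (case l of (a,b,c,d) \<Rightarrow> d)"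
lemmas fdefs = fa_def fb_def fc_def fd_def

lemma phi_shift_ex:
  assumes m: "mdeg m = 2"
  shows "\<exists>u1 u2 u3 u4. \<forall>y. phi m (x + y) = phi m x + phi m y + u1*fa y + u2*fb y + u3*fc y + u4*fd y"
proof -
  obtain a b c d where x: "x = (a,b,c,d)" by (cases x) auto
  have "\<forall>y. phi (2,0,0,0) (x + y) = phi (2,0,0,0) x + phi (2,0,0,0) y + a*fa y + 0*fb y + 0*fc y + 0*fd y"
    by (auto simp: x phi_def CP_lookups CP_lookups1 tri_add fdefs algebra_simps)
  then have c1: "m = (2,0,0,0) \<Longrightarrow> (\<exists>u1 u2 u3 u4. \<forall>y. phi m (x + y) = phi m x + phi m y + u1*fa y + u2*fb y + u3*fc y + u4*fd y)" by blast
  have "\<forall>y. phi (0,2,0,0) (x + y) = phi (0,2,0,0) x + phi (0,2,0,0) y + 0*fa y + b*fb y + 0*fc y + 0*fd y"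
    by (auto simp: x phi_def CP_lookups CP_lookups1 tri_add fdefs algebra_simps)
  then have c2: "m = (0,2,0,0) \<Longrightarrow> (\<exists>u1 u2 u3 u4. \<forall>y. phi m (x + y) = phi m x + phi m y + u1*fa y + u2*fb y + u3*fc y + u4*fd y)" by blast
  have "\<forall>y. phi (0,0,2,0) (x + y) = phi (0,0,2,0) x + phi (0,0,2,0) y + 0*fa y + 0*fb y + c*fc y + 0*fd y"
    by (auto simp: x phi_def CP_lookups CP_lookups1 tri_add fdefs algebra_simps)
  then have c3: "m = (0,0,2,0) \<Longrightarrow> (\<exists>u1 u2 u3 u4. \<forall>y. phi m (x + y) = phi m x + phi m y + u1*fa y + u2*fb y + u3*fc y + u4*fd y)" by blast
  have "\<forall>y. phi (0,0,0,2) (x + y) = phi (0,0,0,2) x + phi (0,0,0,2) y + 0*fa y + 0*fb y + 0*fc y + d*fd y"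
    by (auto simp: x phi_def CP_lookups CP_lookups1 tri_add fdefs algebra_simps)
  then have c4: "m = (0,0,0,2) \<Longrightarrow> (\<exists>u1 u2 u3 u4. \<forall>y. phi m (x + y) = phi m x + phi m y + u1*fa y + u2*fb y + u3*fc y + u4*fd y)" by blast
  have "\<forall>y. phi (1,1,0,0) (x + y) = phi (1,1,0,0) x + phi (1,1,0,0) y + b*fa y + a*fb y + 0*fc y + 0*fd y"
    by (auto simp: x phi_def CP_lookups CP_lookups1 tri_add fdefs algebra_simps)
  then have c5: "m = (1,1,0,0) \<Longrightarrow> (\<exists>u1 u2 u3 u4. \<forall>y. phi m (x + y) = phi m x + phi m y + u1*fa y + u2*fb y + u3*fc y + u4*fd y)" by blast
  have "\<forall>y. phi (1,0,1,0) (x + y) = phi (1,0,1,0) x + phi (1,0,1,0) y + c*fa y + 0*fb y + a*fc y + 0*fd y"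
    by (auto simp: x phi_def CP_lookups CP_lookups1 tri_add fdefs algebra_simps)
  then have c6: "m = (1,0,1,0) \<Longrightarrow> (\<exists>u1 u2 u3 u4. \<forall>y. phi m (x + y) = phi m x + phi m y + u1*fa y + u2*fb y + u3*fc y + u4*fd y)" by blast
  have "\<forall>y. phi (1,0,0,1) (x + y) = phi (1,0,0,1) x + phi (1,0,0,1) y + d*fa y + 0*fb y + 0*fc y + a*fd y"
    by (auto simp: x phi_def CP_lookups CP_lookups1 tri_add fdefs algebra_simps)
  then have c7: "m = (1,0,0,1) \<Longrightarrow> (\<exists>u1 u2 u3 u4. \<forall>y. phi m (x + y) = phi m x + phi m y + u1*fa y + u2*fb y + u3*fc y + u4*fd y)" by blast
  have "\<forall>y. phi (0,1,1,0) (x + y) = phi (0,1,1,0) x + phi (0,1,1,0) y + 0*fa y + c*fb y + b*fc y + 0*fd y"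
    by (auto simp: x phi_def CP_lookups CP_lookups1 tri_add fdefs algebra_simps)
  then have c8: "m = (0,1,1,0) \<Longrightarrow> (\<exists>u1 u2 u3 u4. \<forall>y. phi m (x + y) = phi m x + phi m y + u1*fa y + u2*fb y + u3*fc y + u4*fd y)" by blast
  have "\<forall>y. phi (0,1,0,1) (x + y) = phi (0,1,0,1) x + phi (0,1,0,1) y + 0*fa y + d*fb y + 0*fc y + b*fd y"
    by (auto simp: x phi_def CP_lookups CP_lookups1 tri_add fdefs algebra_simps)
  then have c9: "m = (0,1,0,1) \<Longrightarrow> (\<exists>u1 u2 u3 u4. \<forall>y. phi m (x + y) = phi m x + phi m y + u1*fa y + u2*fb y + u3*fc y + u4*fd y)" by blast
  have "\<forall>y. phi (0,0,1,1) (x + y) = phi (0,0,1,1) x + phi (0,0,1,1) y + 0*fa y + 0*fb y + d*fc y + c*fd y"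
    by (auto simp: x phi_def CP_lookups CP_lookups1 tri_add fdefs algebra_simps)
  then have c10: "m = (0,0,1,1) \<Longrightarrow> (\<exists>u1 u2 u3 u4. \<forall>y. phi m (x + y) = phi m x + phi m y + u1*fa y + u2*fb y + u3*fc y + u4*fd y)" by blast
  show ?thesis using mdeg2[OF m] c1 c2 c3 c4 c5 c6 c7 c8 c9 c10 by blast
qed

lemma S_fund:
  assumes h: "W_invariant h"
  shows "S h fa = 0" "S h fb = 0" "S h fc = 0" "S h fd = 0"
proof -
  have "2 * S h fa = S h (\<lambda>l. E1 l - E2 l)"
    unfolding S_fscale[symmetric] by (rule S_cong) (simp add: fdefs Edefs split: prod.splits)
  then show "S h fa = 0" by (simp add: S_fdiff F0lin_all[OF h])
  have "2 * S h fb = S h (\<lambda>l. E2 l - E3 l)"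
    unfolding S_fscale[symmetric] by (rule S_cong) (simp add: fdefs Edefs split: prod.splits)
  then show "S h fb = 0" by (simp add: S_fdiff F0lin_all[OF h])
  have "2 * S h fc = S h (\<lambda>l. E3 l - E4 l)"
    unfolding S_fscale[symmetric] by (rule S_cong) (simp add: fdefs Edefs split: prod.splits)
  then show "S h fc = 0" by (simp add: S_fdiff F0lin_all[OF h])
  have "2 * S h fd = S h (\<lambda>l. E3 l + E4 l)"
    unfolding S_fscale[symmetric] by (rule S_cong) (simp add: fdefs Edefs split: prod.splits)
  then show "S h fd = 0" by (simp add: S_fadd F0lin_all[OF h])
qed

lemma phi_shift:
  assumes h: "W_invariant h" and h0: "aug h = 0" and m: "mdeg m = 2"
  shows "S h (\<lambda>y. phi m (x + y)) = S h (phi m)"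
proof -
  obtain u1 u2 u3 u4 where u: "\<And>y. phi m (x + y) = phi m x + phi m y + u1*fa y + u2*fb y + u3*fc y + u4*fd y"
    using phi_shift_ex[OF m, of x] by blast
  have "S h (\<lambda>y. phi m (x + y)) = S h (\<lambda>y. phi m x + phi m y + u1*fa y + u2*fb y + u3*fc y + u4*fd y)"
    by (rule S_cong) (rule u)
  also have "\<dots> = S h (phi m)"
    by (simp only: S_fadd S_fscale S_const h0 S_fund[OF h] mult_zero_left mult_zero_right add_0_right add_0_left)
  finally show ?thesis .
qed

lemma mdeg11: "mdeg (2,0,0,0) = 2" by (simp add: mdeg_def)

lemma IW_main:
  assumes "F \<in> IW_sc"
  shows "(\<forall>m. mdeg m = 2 \<longrightarrow> S F (phi m) = qc m * S F (phi (2,0,0,0))) \<and> 64 dvd S F Psi4"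
  using assms
proof (induction rule: IW_sc.induct)
  case IW_zero
  then show ?case by simp
next
  case (IW_gen h g)
  have sm: "S (g * h) (phi m) = S h (phi m) * aug g" if "mdeg m = 2" for m
  proof -
    have "S (g * h) (phi m) = S g (\<lambda>x. S h (\<lambda>y. phi m (x + y)))" by (rule S_mult)
    also have "\<dots> = S g (\<lambda>x. S h (phi m))" by (rule S_cong) (rule phi_shift[OF IW_gen(1,2) that])
    also have "\<dots> = S h (phi m) * aug g" by (rule S_const)
    finally show ?thesis .
  qed
  have A: "\<forall>m. mdeg m = 2 \<longrightarrow> S (g * h) (phi m) = qc m * S (g * h) (phi (2,0,0,0))"
    using sm sm[OF mdeg11] phi_inv[OF IW_gen(1)] by simp
  have "S (g * h) Psi4 = S g (\<lambda>x. S h (\<lambda>y. Psi4 (x + y)))" by (rule S_mult)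
  moreover have "64 dvd S g (\<lambda>x. S h (\<lambda>y. Psi4 (x + y)))"
    by (rule S_dvd) (rule gen_dvd[OF IW_gen(1,2)])
  ultimately show ?case using A by simp
next
  case (IW_add a b)
  then show ?case by (simp add: S_add algebra_simps)
qed

lemma root_lattice_Rt: "l \<in> root_lattice \<longleftrightarrow> Rt l"
proof
  assume "l \<in> root_lattice"
  then obtain c1 c2 c3 c4 where l: "l = wscale c1 (simple_root 1) + wscale c2 (simple_root 2)
       + wscale c3 (simple_root 3) + wscale c4 (simple_root 4)" unfolding root_lattice_def by blast
  show "Rt l" unfolding l by (simp add: wscale_def simple_root_def Rt_def; presburger)
next
  assume r: "Rt l"
  obtain a b c d where l: "l = (a,b,c,d)" by (cases l) auto
  from r have "even (c+d)" "even (a+c)" by (simp_all add: l Rt_def)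
  then obtain p q where p: "c + d = 2*p" and q: "a + c = 2*q" by (meson evenE)
  have "l = wscale (a+b+p) (simple_root 1) + wscale (a+2*b+c+d) (simple_root 2)
       + wscale (p+q+b) (simple_root 3) + wscale (q+b+d) (simple_root 4)"
    unfolding l using p q by (simp add: wscale_def simple_root_def algebra_simps)
  then show "l \<in> root_lattice" unfolding root_lattice_def by blast
qed

lemma zero_root: "(0::wt) \<in> root_lattice"
  by (simp add: root_lattice_Rt Rt_def zero_prod_def)

definition Roots :: "wt set" where
  "Roots = {(-2,1,0,0),(-1,-1,1,1),(-1,0,-1,1),(-1,0,1,-1),(-1,0,1,1),(-1,1,-1,-1),(-1,1,-1,1),(-1,1,1,-1),(-1,2,-1,-1),(0,-1,0,0),(0,-1,0,2),(0,-1,2,0),(0,1,-2,0),(0,1,0,-2),(0,1,0,0),(1,-2,1,1),(1,-1,-1,1),(1,-1,1,-1),(1,-1,1,1),(1,0,-1,-1),(1,0,-1,1),(1,0,1,-1),(1,1,-1,-1),(2,-1,0,0)}"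

definition O2 :: "wt set" where
  "O2 = {(-2,0,0,0),(-2,2,0,0),(0,-2,2,2),(0,0,-2,2),(0,0,2,-2),(0,2,-2,-2),(2,-2,0,0),(2,0,0,0)}"

lemma Roots_closed: "i \<in> {1,2,3,4} \<Longrightarrow> x \<in> Roots \<Longrightarrow> simple_refl i x \<in> Roots"
proof -
  assume i: "i \<in> {1,2,3,4}" and x: "x \<in> Roots"
  from i have "i = 1 \<or> i = 2 \<or> i = 3 \<or> i = 4" by simp
  then show ?thesis using x unfolding Roots_def
    by (elim disjE insertE; simp add: sr_tuple)
qed

lemma O2_closed: "i \<in> {1,2,3,4} \<Longrightarrow> x \<in> O2 \<Longrightarrow> simple_refl i x \<in> O2"
proof -
  assume i: "i \<in> {1,2,3,4}" and x: "x \<in> O2"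
  from i have "i = 1 \<or> i = 2 \<or> i = 3 \<or> i = 4" by simp
  then show ?thesis using x unfolding O2_def
    by (elim disjE insertE; simp add: sr_tuple)
qed

lemma closed_weyl:
  assumes cl: "\<And>i x. i \<in> {1,2,3,4} \<Longrightarrow> x \<in> A \<Longrightarrow> simple_refl i x \<in> A"
  and w: "w \<in> weyl"
  shows "(w x \<in> A) = (x \<in> A)"
  using w
proof (induction arbitrary: x)
  case weyl_id
  then show ?case by simp
next
  case (weyl_step w i)
  have "(simple_refl i (w x) \<in> A) = (w x \<in> A)"
    using cl[OF weyl_step(2), of "w x"] cl[OF weyl_step(2), of "simple_refl i (w x)"] sr_invol[OF weyl_step(2)]
    by auto
  then show ?case using weyl_step(3) by simp
qed

definition F0 :: "int \<Rightarrow> grpring" where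
  "F0 k = (\<Sum>x\<in>Roots. Poly_Mapping.single x k) - (\<Sum>x\<in>O2. Poly_Mapping.single x k)"

lemma finRO: "finite Roots" "finite O2" by (simp_all add: Roots_def O2_def)

lemma lookup_F0: "Poly_Mapping.lookup (F0 k) l = k * ob (l \<in> Roots) - k * ob (l \<in> O2)"
  unfolding F0_def by (simp add: lookup_minus lookup_sum lookup_single when_def finRO)

lemma F0_inv: "W_invariant (F0 k)"
  unfolding W_invariant_def lookup_F0
  using closed_weyl[OF Roots_closed] closed_weyl[OF O2_closed] by simp

lemma keys_F0: "Poly_Mapping.keys (F0 k) \<subseteq> root_lattice"
proof
  fix l assume "l \<in> Poly_Mapping.keys (F0 k)"
  then have "l \<in> Roots \<or> l \<in> O2" by (auto simp: in_keys_iff lookup_F0)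
  then show "l \<in> root_lattice" unfolding root_lattice_Rt Roots_def O2_def
    by (elim disjE insertE; simp add: Rt_def)
qed

lemma S_F0: "S (F0 k) G = k * ((\<Sum>x\<in>Roots. G x) - (\<Sum>x\<in>O2. G x))"
  by (simp add: F0_def S_diff S_setsum finRO S_single sum_distrib_left right_diff_distrib)

lemma c2_F0: "mdeg m = 2 \<Longrightarrow> S (F0 k) (phi m) = 4 * k * qc m"
proof -
  assume m: "mdeg m = 2"
  have r: "(\<Sum>x\<in>Roots. phi m x) - (\<Sum>x\<in>O2. phi m x) = 4 * qc m"
    using mdeg2[OF m]
    by (elim insertE emptyE; simp add: Roots_def O2_def phi_def CP_lookups CP_lookups1 tri_def qc_def)
  show ?thesis unfolding S_F0 r by simp
qed

lemma c2_phi: assumes m: "mdeg m = 2" shows "c2 F m = S F (phi m)"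
proof -
  have "c2 F m = S F (\<lambda>l. Poly_Mapping.lookup (chern_img l) m)" using m by (simp add: c2_S)
  also have "\<dots> = S F (phi m)" by (rule S_cong) (simp add: phi_def chern_lookup2[OF m])
  finally show ?thesis .
qed

lemma c2_not2: "mdeg m \<noteq> 2 \<Longrightarrow> c2 F m = 0"
  by (simp add: c2_def)

lemma S_cong_keys: "(\<And>l. l \<in> Poly_Mapping.keys F \<Longrightarrow> G l = G' l) \<Longrightarrow> S F G = S F G'"
  by (simp add: S_def)

lemma Psi4_phi: "Rt l \<Longrightarrow> Psi4 l = 4 * (2*phi (2,0,0,0) l + 4*phi (0,2,0,0) l + 2*phi (0,0,2,0) l + 2*phi (0,0,0,2) l
   + 2*phi (1,1,0,0) l + phi (1,0,1,0) l + phi (1,0,0,1) l + 2*phi (0,1,1,0) l + 2*phi (0,1,0,1) l + phi (0,0,1,1) l)"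
proof -
  assume r: "Rt l"
  obtain a b c d where l: "l = (a,b,c,d)" by (cases l) auto
  have t: "2 * tri a = a * (a+1)" "2 * tri b = b * (b+1)" "2 * tri c = c * (c+1)" "2 * tri d = d * (d+1)"
    by (rule tri2)+
  show ?thesis using r t unfolding l
    by (simp add: Psi4_def ell4_def nE_formula phi_def CP_lookups CP_lookups1 power2_eq_square algebra_simps)
qed

lemma mdeg_nums: "mdeg (2,0,0,0) = 2" "mdeg (0,2,0,0) = 2" "mdeg (0,0,2,0) = 2" "mdeg (0,0,0,2) = 2"
  "mdeg (1,1,0,0) = 2" "mdeg (1,0,1,0) = 2" "mdeg (1,0,0,1) = 2" "mdeg (0,1,1,0) = 2" "mdeg (0,1,0,1) = 2" "mdeg (0,0,1,1) = 2"
  by (simp_all add: mdeg_def)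

lemma Sdec_sub: "Sdec \<subseteq> Dec"
proof
  fix v assume "v \<in> Sdec"
  then obtain f where v: "v = c2 f" and kf: "Poly_Mapping.keys f \<subseteq> root_lattice" and fI: "f \<in> IW_sc"
    unfolding Sdec_def by blast
  note M = IW_main[OF fI]
  define \<kappa> where "\<kappa> = S f (phi (2,0,0,0))"
  have M1: "\<forall>m. mdeg m = 2 \<longrightarrow> S f (phi m) = qc m * S f (phi (2,0,0,0))" using M by (rule conjunct1)
  have P1: "S f (phi m) = qc m * \<kappa>" if "mdeg m = 2" for m using M1 that unfolding \<kappa>_def by blast
  have vals: "S f (phi (2,0,0,0)) = \<kappa>" "S f (phi (0,2,0,0)) = \<kappa>" "S f (phi (0,0,2,0)) = \<kappa>" "S f (phi (0,0,0,2)) = \<kappa>"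
    "S f (phi (1,1,0,0)) = - \<kappa>" "S f (phi (1,0,1,0)) = 0" "S f (phi (1,0,0,1)) = 0" "S f (phi (0,1,1,0)) = - \<kappa>"
    "S f (phi (0,1,0,1)) = - \<kappa>" "S f (phi (0,0,1,1)) = 0"
    by (subst P1, rule mdeg_nums, simp add: qc_def)+
  have "S f Psi4 = S f (\<lambda>l. 4 * (2*phi (2,0,0,0) l + 4*phi (0,2,0,0) l + 2*phi (0,0,2,0) l + 2*phi (0,0,0,2) l
   + 2*phi (1,1,0,0) l + phi (1,0,1,0) l + phi (1,0,0,1) l + 2*phi (0,1,1,0) l + 2*phi (0,1,0,1) l + phi (0,0,1,1) l))"
  proof (rule S_cong_keys)
    fix l assume "l \<in> Poly_Mapping.keys f"
    then have "Rt l" using kf root_lattice_Rt by blast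
    then show "Psi4 l = 4 * (2*phi (2,0,0,0) l + 4*phi (0,2,0,0) l + 2*phi (0,0,2,0) l + 2*phi (0,0,0,2) l
   + 2*phi (1,1,0,0) l + phi (1,0,1,0) l + phi (1,0,0,1) l + 2*phi (0,1,1,0) l + 2*phi (0,1,0,1) l + phi (0,0,1,1) l)"
      by (rule Psi4_phi)
  qed
  also have "\<dots> = 16 * \<kappa>"
    by (simp only: S_fadd S_fscale vals) simp
  finally have "64 dvd 16 * \<kappa>" using M by simp
  then obtain j where "16 * \<kappa> = 64 * j" by blast
  then have k: "\<kappa> = 4 * j" by simp
  define k where "k = j"
  note k = k[folded k_def]
  have "c2 f = c2 (F0 k)"
  proof
    fix m
    show "c2 f m = c2 (F0 k) m"
    proof (cases "mdeg m = 2")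
      case True
      then show ?thesis by (simp add: c2_phi P1 c2_F0 k)
    next
      case False
      then show ?thesis by (simp add: c2_not2)
    qed
  qed
  moreover have "c2 (F0 k) \<in> Dec" unfolding Dec_def using keys_F0 F0_inv by blast
  ultimately show "v \<in> Dec" unfolding v by simp
qed

lemma sr_zero: "i \<in> {1,2,3,4} \<Longrightarrow> (simple_refl i l = 0) = (l = 0)"
proof -
  assume i: "i \<in> {1,2,3,4}"
  have z: "simple_refl i 0 = 0" by (simp add: simple_refl_def wsub_def wscale_def coord_def zero_prod_def)
  show ?thesis using sr_invol[OF i, of l] z by metis
qed

lemma weyl_zero: "w \<in> weyl \<Longrightarrow> (w l = 0) = (l = 0)"
  by (induction arbitrary: l rule: weyl.induct) (simp_all add: sr_zero)

lemma phi_zero: "mdeg m = 2 \<Longrightarrow> phi m 0 = 0"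
  by (drule mdeg2) (elim insertE emptyE; simp add: phi_def zero_prod_def CP_lookups CP_lookups1 tri_def)

lemma Dec_sub: "Dec \<subseteq> Sdec"
proof
  fix v assume "v \<in> Dec"
  then obtain f where v: "v = c2 f" and kf: "Poly_Mapping.keys f \<subseteq> root_lattice" and fW: "W_invariant f"
    unfolding Dec_def by blast
  define f' where "f' = f - Poly_Mapping.single 0 (aug f)"
  have lk: "Poly_Mapping.lookup f' l = Poly_Mapping.lookup f l - (if l = 0 then aug f else 0)" for l
    by (auto simp: f'_def lookup_minus lookup_single when_def)
  have W': "W_invariant f'"
    unfolding W_invariant_def
  proof (intro ballI allI)
    fix w l assume w: "w \<in> weyl"
    have z: "(w l = 0) = (l = 0)" by (rule weyl_zero[OF w])
    have "Poly_Mapping.lookup f (w l) = Poly_Mapping.lookup f l" using fW w unfolding W_invariant_def by blast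
    then show "Poly_Mapping.lookup f' (w l) = Poly_Mapping.lookup f' l" unfolding lk z by simp
  qed
  have a0: "aug f' = 0"
    unfolding aug_S f'_def S_diff S_single by (simp add: aug_S)
  have "1 * f' \<in> IW_sc" by (rule IW_gen[OF W' a0])
  then have I: "f' \<in> IW_sc" by simp
  have k': "Poly_Mapping.keys f' \<subseteq> root_lattice"
  proof
    fix l assume "l \<in> Poly_Mapping.keys f'"
    then have "l \<in> Poly_Mapping.keys f \<or> l = 0" by (auto simp: in_keys_iff lk split: if_splits)
    then show "l \<in> root_lattice" using kf zero_root by blast
  qed
  have "c2 f' = c2 f"
  proof
    fix m
    show "c2 f' m = c2 f m"
    proof (cases "mdeg m = 2")
      case True
      then show ?thesis by (simp add: c2_phi f'_def S_diff S_single phi_zero)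
    next
      case False
      then show ?thesis by (simp add: c2_not2)
    qed
  qed
  moreover have "c2 f' \<in> Sdec" unfolding Sdec_def using I k' by blast
  ultimately show "v \<in> Sdec" unfolding v by simp
qed

theorem corollary10p4:
  shows "Sdec = Dec"
  using Sdec_sub Dec_sub by blast

end
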